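(* There exists a two-sided non-adaptive tester for $k$-monotonicity of functions $f\colon[n]\to\{0,1\}$ with query complexity $q(n,\varepsilon,k)=\tilde{O}(1/\varepsilon^7)$, independent of $k$ and $n$.
   Context: $[n]=\{1,\dots,n\}$ with its usual order. A function $f\colon[n]\to\{0,1\}$ is $k$-monotone if there do not exist $x_1\leq\cdots\leq x_{k+1}$ with $f(x_1)=1$ and $f(x_i)\neq f(x_{i+1})$ for all $i\in[k]$. Distance is normalized Hamming distance. A (two-sided) tester, given $\varepsilon$ and query access to $f$, accepts $k$-monotone $f$ with probability at least $2/3$ and rejects $f$ that is $\varepsilon$-far from $k$-monotone with probability at least $2/3$; non-adaptive means queries do not depend on previous answers. $\tilde{O}(\cdot)$ hides polylogarithmic factors in its argument. *)

theory Defs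
  imports "HOL-Probability.Probability_Mass_Function"
begin

(* A function [n] -> {0,1} is represented as f :: nat => bool; only its values on {1..n} matter. *)

definition k_monotone :: "nat \<Rightarrow> nat \<Rightarrow> (nat \<Rightarrow> bool) \<Rightarrow> bool" where
  "k_monotone n k f \<longleftrightarrow>
     \<not> (\<exists>x :: nat \<Rightarrow> nat.
          (\<forall>i\<in>{1..k+1}. x i \<in> {1..n}) \<and>
          (\<forall>i\<in>{1..k}. x i \<le> x (i+1)) \<and>
          f (x 1) \<and>
          (\<forall>i\<in>{1..k}. f (x i) \<noteq> f (x (i+1))))"

definition hdist :: "nat \<Rightarrow> (nat \<Rightarrow> bool) \<Rightarrow> (nat \<Rightarrow> bool) \<Rightarrow> real" where
  "hdist n f g = real (card {x\<in>{1..n}. f x \<noteq> g x}) / real n"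

definition far_from_k_monotone :: "nat \<Rightarrow> nat \<Rightarrow> real \<Rightarrow> (nat \<Rightarrow> bool) \<Rightarrow> bool" where
  "far_from_k_monotone n k \<epsilon> f \<longleftrightarrow> (\<forall>g. k_monotone n k g \<longrightarrow> hdist n f g \<ge> \<epsilon>)"

(* Queries are chosen before any answers are seen (non-adaptivity). *)
definition nonadaptive_tester :: "nat \<Rightarrow> nat \<Rightarrow> (nat list \<times> (bool list \<Rightarrow> bool)) pmf \<Rightarrow> bool" where
  "nonadaptive_tester n q T \<longleftrightarrow>
     (\<forall>(Q, d) \<in> set_pmf T. length Q \<le> q \<and> set Q \<subseteq> {1..n})"

definition accept_prob :: "(nat list \<times> (bool list \<Rightarrow> bool)) pmf \<Rightarrow> (nat \<Rightarrow> bool) \<Rightarrow> real" where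
  "accept_prob T f = measure_pmf.prob T {(Q, d). d (map f Q)}"

end

theory Submission
  imports Defs "HOL-Probability.Hoeffding"
begin

definition fz :: "(nat \<Rightarrow> bool) \<Rightarrow> nat \<Rightarrow> bool" where
  "fz f i = (i \<noteq> 0 \<and> f i)"

definition chg :: "nat \<Rightarrow> (nat \<Rightarrow> bool) \<Rightarrow> nat set" where
  "chg n f = {i\<in>{1..n}. fz f i \<noteq> fz f (i - 1)}"

definition cc :: "nat \<Rightarrow> (nat \<Rightarrow> bool) \<Rightarrow> nat" where
  "cc n f = card (chg n f)"

lemma finite_chg[simp]: "finite (chg n f)"
  unfolding chg_def by auto

lemma chg_sub: "chg n f \<subseteq> {1..n}"
  unfolding chg_def by auto

lemma ex_chg:
  assumes "a < b" "fz f a \<noteq> fz f b"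
  shows "\<exists>p\<in>{a<..b}. fz f p \<noteq> fz f (p - 1)"
  using assms
proof (induction b)
  case 0 then show ?case by simp
next
  case (Suc b)
  show ?case
  proof (cases "fz f (Suc b) \<noteq> fz f b")
    case True then show ?thesis using Suc.prems by (intro bexI[of _ "Suc b"]) auto
  next
    case False
    then have "a < b" using Suc.prems by (metis less_SucE)
    moreover have "fz f a \<noteq> fz f b" using False Suc.prems by simp
    ultimately obtain p where "p\<in>{a<..b}" "fz f p \<noteq> fz f (p - 1)" using Suc.IH by blast
    then show ?thesis by (intro bexI[of _ p]) auto
  qed
qed

lemma no_chg:
  assumes "a \<le> b" "\<And>p. a < p \<Longrightarrow> p \<le> b \<Longrightarrow> fz f p = fz f (p - 1)"
  shows "fz f a = fz f b"
  using ex_chg[of a b f] assms by (cases "a = b") force+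

lemma cc_imp_kmono:
  assumes "cc n f \<le> k"
  shows "k_monotone n k f"
  unfolding k_monotone_def
proof
  assume "\<exists>x. (\<forall>i\<in>{1..k + 1}. x i \<in> {1..n}) \<and> (\<forall>i\<in>{1..k}. x i \<le> x (i + 1)) \<and>
        f (x 1) \<and> (\<forall>i\<in>{1..k}. f (x i) \<noteq> f (x (i + 1)))"
  then obtain x where x1: "\<forall>i\<in>{1..k + 1}. x i \<in> {1..n}" and x2: "\<forall>i\<in>{1..k}. x i \<le> x (i + 1)"
    and x3: "f (x 1)" and x4: "\<forall>i\<in>{1..k}. f (x i) \<noteq> f (x (i + 1))" by blast
  define y where "y i = (if i = 0 then 0 else x i)" for i
  have fy: "fz f (y i) = f (x i)" if "i \<in> {1..k+1}" for i
  proof -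
    have "x i \<in> {1..n}" using x1 that by blast
    then show ?thesis using that by (auto simp: y_def fz_def)
  qed
  have step: "y i < y (Suc i) \<and> fz f (y i) \<noteq> fz f (y (Suc i))" if "i \<le> k" for i
  proof (cases "i = 0")
    case True
    have "x 1 \<in> {1..n}" using x1 by auto
    then show ?thesis using x3 True by (auto simp: y_def fz_def)
  next
    case False
    then have "i \<in> {1..k}" "Suc i \<in> {1..k+1}" "i \<in> {1..k+1}" using that by auto
    have "f (x i) \<noteq> f (x (i + 1))" using x4 \<open>i \<in> {1..k}\<close> by blast
    then have fzn: "fz f (y i) \<noteq> fz f (y (Suc i))" using fy[of i] fy[of "Suc i"] \<open>Suc i \<in> {1..k+1}\<close> \<open>i \<in> {1..k+1}\<close> by simp
    moreover have "y i \<le> y (Suc i)" using x2 \<open>i \<in> {1..k}\<close> False by (auto simp: y_def)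
    moreover have "y i \<noteq> y (Suc i)" using fzn by metis
    ultimately show ?thesis using fzn by simp
  qed
  have "\<forall>i\<in>{..k}. \<exists>p. p \<in> {y i<..y (Suc i)} \<and> fz f p \<noteq> fz f (p - 1)"
  proof
    fix i assume "i \<in> {..k}"
    then have "i \<le> k" by simp
    then have "y i < y (Suc i)" "fz f (y i) \<noteq> fz f (y (Suc i))" using step[of i] by simp_all
    then show "\<exists>p. p \<in> {y i<..y (Suc i)} \<and> fz f p \<noteq> fz f (p - 1)"
      using ex_chg[of "y i" "y (Suc i)" f] by blast
  qed
  from bchoice[OF this] obtain p where p0: "\<forall>i\<in>{..k}. p i \<in> {y i<..y (Suc i)} \<and> fz f (p i) \<noteq> fz f (p i - 1)" by blast
  have p: "p i \<in> {y i<..y (Suc i)} \<and> fz f (p i) \<noteq> fz f (p i - 1)" if "i \<le> k" for i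
    using p0 that by simp
  have pin: "p i \<in> chg n f" if "i \<le> k" for i
  proof -
    have "x (Suc i) \<in> {1..n}" using x1 that by auto
    then have "y (Suc i) \<le> n" by (auto simp: y_def)
    then show ?thesis using p[OF that] by (auto simp: chg_def)
  qed
  have pmono: "p i < p j" if "i < j" "j \<le> k" for i j
    using that
  proof (induction j)
    case 0 then show ?case by simp
  next
    case (Suc j)
    have "p j \<le> y (Suc j)" using p[of j] Suc.prems by auto
    also have "y (Suc j) < p (Suc j)" using p[of "Suc j"] Suc.prems by auto
    finally have "p j < p (Suc j)" .
    then show ?case using Suc by (cases "i = j") auto
  qed
  have "inj_on p {..k}"
  proof (rule inj_onI)
    fix i j assume "i \<in> {..k}" "j \<in> {..k}" "p i = p j"
    then show "i = j" using pmono[of i j] pmono[of j i] by (cases i j rule: linorder_cases) auto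
  qed
  then have "card (p ` {..k}) = k + 1" by (simp add: card_image)
  moreover have "p ` {..k} \<subseteq> chg n f" using pin by auto
  ultimately have "k + 1 \<le> cc n f" unfolding cc_def by (metis card_mono finite_chg)
  then show False using assms by simp
qed

lemma kmono_imp_cc:
  assumes "k_monotone n k f"
  shows "cc n f \<le> k"
proof (rule ccontr)
  assume "\<not> cc n f \<le> k"
  then have ck: "k + 1 \<le> cc n f" by simp
  define ps where "ps = sorted_list_of_set (chg n f)"
  have sps: "sorted_wrt (<) ps" and setps: "set ps = chg n f" and lps: "length ps = cc n f"
    unfolding ps_def cc_def by auto
  have nl1: "ps ! i < ps ! j" if "i < j" "j < length ps" for i j
    using sps that by (simp add: sorted_wrt_nth_less)
  have nth_less: "ps ! i < ps ! j \<longleftrightarrow> i < j" if "i < length ps" "j < length ps" for i j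
  proof
    assume a: "ps ! i < ps ! j"
    show "i < j"
    proof (rule ccontr)
      assume "\<not> i < j"
      then have "j < i \<or> j = i" by auto
      then show False using nl1[of j i] that a by auto
    qed
  qed (use nl1 that in auto)
  have psin: "ps ! i \<in> chg n f" if "i < length ps" for i
    using that setps nth_mem by blast
  have val: "fz f (ps ! j) = even j" if "j < length ps" for j
    using that
  proof (induction j)
    case 0
    have nc: "fz f q = fz f (q - 1)" if "0 < q" "q \<le> ps ! 0 - 1" for q
    proof (rule ccontr)
      assume "fz f q \<noteq> fz f (q - 1)"
      moreover have "q \<le> n" using psin[OF 0] that chg_sub by fastforce
      ultimately have "q \<in> chg n f" using that by (auto simp: chg_def)
      then obtain i where "i < length ps" "ps ! i = q" using setps by (metis in_set_conv_nth)
      moreover have "ps ! 0 \<ge> 1" using psin[OF 0] chg_sub by fastforce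
      ultimately have "ps ! i < ps ! 0" using that by linarith
      then show False using nth_less[OF \<open>i < length ps\<close> 0] by simp
    qed
    have "fz f 0 = fz f (ps ! 0 - 1)" by (rule no_chg) (use nc in auto)
    moreover have "fz f (ps ! 0) \<noteq> fz f (ps ! 0 - 1)" using psin[OF 0] by (auto simp: chg_def)
    ultimately show ?case by (simp add: fz_def)
  next
    case (Suc j)
    have jl: "j < length ps" using Suc.prems by simp
    have nc: "fz f q = fz f (q - 1)" if "ps ! j < q" "q \<le> ps ! Suc j - 1" for q
    proof (rule ccontr)
      assume "fz f q \<noteq> fz f (q - 1)"
      moreover have "q \<le> n" using psin[OF Suc.prems] that chg_sub by fastforce
      moreover have "q \<ge> 1" using that by simp
      ultimately have "q \<in> chg n f" by (auto simp: chg_def)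
      then obtain i where il: "i < length ps" "ps ! i = q" using setps by (metis in_set_conv_nth)
      have "ps ! j < ps ! i" "ps ! i < ps ! Suc j" using that il by auto
      then have "j < i" "i < Suc j" using nth_less il jl Suc.prems by auto
      then show False by simp
    qed
    have lt: "ps ! j < ps ! Suc j" using nth_less jl Suc.prems by simp
    have "fz f (ps ! j) = fz f (ps ! Suc j - 1)" by (rule no_chg) (use nc lt in auto)
    moreover have "fz f (ps ! Suc j) \<noteq> fz f (ps ! Suc j - 1)" using psin[OF Suc.prems] by (auto simp: chg_def)
    ultimately show ?case using Suc.IH[OF jl] by auto
  qed
  define x where "x i = ps ! (i - 1)" for i
  have "(\<forall>i\<in>{1..k + 1}. x i \<in> {1..n}) \<and> (\<forall>i\<in>{1..k}. x i \<le> x (i + 1)) \<and>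
        f (x 1) \<and> (\<forall>i\<in>{1..k}. f (x i) \<noteq> f (x (i + 1)))"
  proof (intro conjI ballI)
    fix i assume "i \<in> {1..k+1}"
    then have "i - 1 < length ps" using lps ck by auto
    then have "ps ! (i - 1) \<in> chg n f" by (rule psin)
    then show "x i \<in> {1..n}" using chg_sub unfolding x_def by blast
  next
    fix i assume i: "i \<in> {1..k}"
    then have "i - 1 < i" "i < length ps" using lps ck by auto
    then have "ps ! (i - 1) < ps ! i" using nl1 by blast
    then show "x i \<le> x (i + 1)" unfolding x_def by simp
  next
    have "fz f (x 1) = True" using val[of 0] lps ck by (simp add: x_def)
    then show "f (x 1)" by (simp add: fz_def)
  next
    fix i assume i: "i \<in> {1..k}"
    have l: "i - 1 < length ps" "i < length ps" using lps ck i by auto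
    have "ps ! (i - 1) \<in> chg n f" "ps ! i \<in> chg n f" using psin l by auto
    then have a: "x i \<ge> 1" "x (i+1) \<ge> 1" using chg_sub unfolding x_def by fastforce+
    have "even (i - 1) \<noteq> even i" using i by (cases i) auto
    then have "fz f (x i) \<noteq> fz f (x (i+1))" using val[OF l(1)] val[OF l(2)] unfolding x_def by simp
    then show "f (x i) \<noteq> f (x (i + 1))" using a by (simp add: fz_def)
  qed
  then show False using assms unfolding k_monotone_def by blast
qed

lemma kmono_iff: "k_monotone n k f \<longleftrightarrow> cc n f \<le> k"
  using cc_imp_kmono kmono_imp_cc by blast

definition dcard :: "nat \<Rightarrow> (nat \<Rightarrow> bool) \<Rightarrow> (nat \<Rightarrow> bool) \<Rightarrow> nat" where
  "dcard n f g = card {x\<in>{1..n}. f x \<noteq> g x}"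

lemma dcard_tri: "dcard n f h \<le> dcard n f g + dcard n g h"
proof -
  have "{x\<in>{1..n}. f x \<noteq> h x} \<subseteq> {x\<in>{1..n}. f x \<noteq> g x} \<union> {x\<in>{1..n}. g x \<noteq> h x}" by auto
  then have "card {x\<in>{1..n}. f x \<noteq> h x} \<le> card ({x\<in>{1..n}. f x \<noteq> g x} \<union> {x\<in>{1..n}. g x \<noteq> h x})"
    by (intro card_mono) auto
  also have "\<dots> \<le> card {x\<in>{1..n}. f x \<noteq> g x} + card {x\<in>{1..n}. g x \<noteq> h x}" by (rule card_Un_le)
  finally show ?thesis unfolding dcard_def .
qed

lemma dcard_le_n: "dcard n f g \<le> n"
proof -
  have "card {x\<in>{1..n}. f x \<noteq> g x} \<le> card {1..n}" by (intro card_mono) auto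
  then show ?thesis unfolding dcard_def by simp
qed

lemma sep_bound:
  assumes "finite S" "S \<noteq> {}" "\<forall>p\<in>S. \<forall>q\<in>S. p < q \<longrightarrow> d < q - p"
  shows "(card S - 1) * (d + 1) \<le> Max S - Min S"
  using assms
proof (induction S rule: finite_linorder_max_induct)
  case empty then show ?case by simp
next
  case (insert b A)
  show ?case
  proof (cases "A = {}")
    case True then show ?thesis by simp
  next
    case False
    have IH: "(card A - 1) * (d + 1) \<le> Max A - Min A"
      using insert.IH[OF False] insert.prems(2) by blast
    have MA: "Max A \<in> A" "Max A < b" using False insert by auto
    have gap: "d < b - Max A" using insert.prems(2) MA by auto
    have b_notin: "b \<notin> A" using insert by auto
    have "Max (insert b A) = max b (Max A)" using insert.hyps(1) False by simp
    then have mx: "Max (insert b A) = b" using MA by simp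
    have "Min A \<le> Max A" using False insert by simp
    have "Min (insert b A) = min b (Min A)" using insert.hyps(1) False by simp
    then have mn: "Min (insert b A) = Min A" using MA \<open>Min A \<le> Max A\<close> by simp
    have "card (insert b A) - 1 = card A" using b_notin insert by simp
    have "Min A \<le> Max A" using False insert by simp
    have "card A \<ge> 1" using False insert by (simp add: Suc_leI card_gt_0_iff)
    then have "card A * (d + 1) = (card A - 1) * (d + 1) + (d + 1)"
      by (metis Suc_diff_le diff_Suc_1 mult_Suc le_add_diff_inverse2 add.commute)
    also have "\<dots> \<le> (Max A - Min A) + (b - Max A)" using IH gap by linarith
    also have "\<dots> = b - Min A" using \<open>Min A \<le> Max A\<close> MA by linarith
    finally show ?thesis using \<open>card (insert b A) - 1 = card A\<close> mx mn by simp
  qed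
qed

lemma close_pair:
  assumes k: "k \<ge> 1" and c: "cc n f \<ge> k + 1"
  shows "\<exists>p q. p \<in> chg n f \<and> q \<in> chg n f \<and> p < q \<and> q - p \<le> (n - 1) div k"
proof (rule ccontr)
  assume "\<not> ?thesis"
  then have sep: "\<forall>p\<in>chg n f. \<forall>q\<in>chg n f. p < q \<longrightarrow> (n - 1) div k < q - p" by (auto simp: not_le)
  have ne: "chg n f \<noteq> {}" using c unfolding cc_def by auto
  have "(card (chg n f) - 1) * ((n - 1) div k + 1) \<le> Max (chg n f) - Min (chg n f)"
    by (rule sep_bound[OF finite_chg ne sep])
  also have "\<dots> \<le> n - 1"
  proof -
    have "Max (chg n f) \<in> chg n f" "Min (chg n f) \<in> chg n f" using ne by auto
    then have "Max (chg n f) \<le> n" "Min (chg n f) \<ge> 1" using chg_sub by (meson atLeastAtMost_iff subsetD)+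
    then show ?thesis by linarith
  qed
  finally have A: "(cc n f - 1) * ((n - 1) div k + 1) \<le> n - 1" unfolding cc_def .
  have "k * ((n - 1) div k + 1) \<le> (cc n f - 1) * ((n - 1) div k + 1)"
    using c by (intro mult_right_mono) auto
  moreover have "n - 1 < k * ((n - 1) div k + 1)"
  proof -
    have "n - 1 = k * ((n - 1) div k) + (n - 1) mod k" by simp
    moreover have "(n - 1) mod k < k" using k by simp
    ultimately have "n - 1 < k * ((n - 1) div k) + k" by linarith
    then show ?thesis by (simp add: algebra_simps)
  qed
  ultimately show False using A by linarith
qed

lemma flip_chg:
  assumes p: "p \<in> chg n f" and q: "q \<in> chg n f" and pq: "p < q"
  defines "f' \<equiv> (\<lambda>y. if p \<le> y \<and> y < q then \<not> f y else f y)"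
  shows "chg n f' = chg n f - {p, q}"
proof -
  have p1: "p \<ge> 1" using p chg_sub by force
  have fz': "fz f' i = (fz f i \<noteq> (p \<le> i \<and> i < q))" for i
    using p1 by (auto simp: fz_def f'_def)
  show ?thesis
  proof (intro set_eqI iffI)
    fix i assume "i \<in> chg n f'"
    then have i: "i \<in> {1..n}" "fz f' i \<noteq> fz f' (i - 1)" by (auto simp: chg_def)
    show "i \<in> chg n f - {p, q}"
    proof (cases "i = p \<or> i = q")
      case True
      then show ?thesis using i fz'[of i] fz'[of "i - 1"] p q pq p1
        by (auto simp: chg_def)
    next
      case False
      then have "(p \<le> i \<and> i < q) = (p \<le> i - 1 \<and> i - 1 < q)" using i(1) p1 by auto
      then show ?thesis using i fz'[of i] fz'[of "i - 1"] False by (auto simp: chg_def)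
    qed
  next
    fix i assume "i \<in> chg n f - {p, q}"
    then have i: "i \<in> {1..n}" "fz f i \<noteq> fz f (i - 1)" "i \<noteq> p" "i \<noteq> q" by (auto simp: chg_def)
    then have "(p \<le> i \<and> i < q) = (p \<le> i - 1 \<and> i - 1 < q)" using p1 by auto
    then show "i \<in> chg n f'" using i fz'[of i] fz'[of "i - 1"] by (auto simp: chg_def)
  qed
qed

lemma reduce_changes:
  assumes k: "k \<ge> 1"
  shows "\<exists>g. cc n g \<le> k \<and> dcard n f g \<le> ((cc n f - k + 1) div 2) * ((n - 1) div k)"
  using assms
proof (induction "cc n f" arbitrary: f rule: less_induct)
  case less
  show ?case
  proof (cases "cc n f \<le> k")
    case True
    then show ?thesis by (intro exI[of _ f]) (auto simp: dcard_def)
  next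
    case False
    obtain p q where pq: "p \<in> chg n f" "q \<in> chg n f" "p < q" "q - p \<le> (n - 1) div k"
    proof -
      have "cc n f \<ge> k + 1" using False by simp
      from close_pair[OF k this] show ?thesis using that by blast
    qed
    define f' where "f' = (\<lambda>y. if p \<le> y \<and> y < q then \<not> f y else f y)"
    have ch: "chg n f' = chg n f - {p, q}" unfolding f'_def by (rule flip_chg[OF pq(1-3)])
    have ccf': "cc n f' = cc n f - 2"
      unfolding cc_def ch using pq by (simp add: card_Diff_subset)
    have lt: "cc n f' < cc n f" using ccf' False by simp
    obtain g where g: "cc n g \<le> k" "dcard n f' g \<le> ((cc n f' - k + 1) div 2) * ((n - 1) div k)"
      using less.hyps[OF lt k] by blast
    have "dcard n f f' \<le> q - p"
    proof -
      have "{x\<in>{1..n}. f x \<noteq> f' x} \<subseteq> {p..<q}" by (auto simp: f'_def)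
      then have "card {x\<in>{1..n}. f x \<noteq> f' x} \<le> card {p..<q}" by (intro card_mono) auto
      then show ?thesis by (simp add: dcard_def)
    qed
    then have d1: "dcard n f f' \<le> (n - 1) div k" using pq by linarith
    have e: "(cc n f' - k + 1) div 2 + 1 = (cc n f - k + 1) div 2"
    proof -
      show ?thesis
      proof (cases "cc n f = k + 1")
        case True then show ?thesis using ccf' by simp
      next
        case False
        then have "cc n f - k + 1 = (cc n f' - k + 1) + 2" using ccf' \<open>\<not> cc n f \<le> k\<close> by simp
        then show ?thesis by simp
      qed
    qed
    have "dcard n f g \<le> dcard n f f' + dcard n f' g" by (rule dcard_tri)
    also have "\<dots> \<le> (n - 1) div k + ((cc n f' - k + 1) div 2) * ((n - 1) div k)" using d1 g by linarith
    also have "\<dots> = ((cc n f' - k + 1) div 2 + 1) * ((n - 1) div k)" by (simp add: algebra_simps)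
    also have "\<dots> = ((cc n f - k + 1) div 2) * ((n - 1) div k)" using e by simp
    finally show ?thesis using g by blast
  qed
qed

lemma far_imp:
  assumes "far_from_k_monotone n k \<epsilon> f" "n \<ge> 1" "cc n g \<le> k"
  shows "real (dcard n f g) \<ge> \<epsilon> * n"
proof -
  have "k_monotone n k g" using assms(3) kmono_iff by blast
  then have "hdist n f g \<ge> \<epsilon>" using assms(1) unfolding far_from_k_monotone_def by blast
  then show ?thesis using assms(2) unfolding hdist_def dcard_def by (simp add: field_simps)
qed

lemma prob_bind_pmf_of_set:
  assumes "finite X" "X \<noteq> {}"
  shows "measure_pmf.prob (bind_pmf (pmf_of_set X) K) E = (\<Sum>x\<in>X. measure_pmf.prob (K x) E) / card X"
proof -
  have "measure_pmf.prob (bind_pmf (pmf_of_set X) K) E =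
      measure (measure_pmf (pmf_of_set X) \<bind> (\<lambda>x. measure_pmf (K x))) E"
    by (simp add: measure_pmf_bind)
  also have "\<dots> = measure_pmf.expectation (pmf_of_set X) (\<lambda>x. measure_pmf.prob (K x) E)"
    by (rule measure_pmf.measure_bind[where N="count_space UNIV"]) (auto simp: measure_pmf_in_subprob_algebra)
  also have "\<dots> = (\<Sum>x\<in>X. measure_pmf.prob (K x) E) / card X"
    using assms by (simp add: integral_pmf_of_set)
  finally show ?thesis .
qed

lemma tester_from_seed:
  fixes S :: "'b pmf" and QF :: "'b \<Rightarrow> nat list" and \<Phi> :: "'b \<Rightarrow> (nat \<Rightarrow> bool) \<Rightarrow> bool"
  assumes q: "\<And>F. F \<in> set_pmf S \<Longrightarrow> length (QF F) \<le> q \<and> set (QF F) \<subseteq> {1..n}"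
    and loc: "\<And>F h h'. (\<And>y. y \<in> set (QF F) \<Longrightarrow> h y = h' y) \<Longrightarrow> \<Phi> F h = \<Phi> F h'"
  defines "T \<equiv> map_pmf (\<lambda>F. (QF F, \<lambda>bs. \<Phi> F (\<lambda>y. the (map_of (zip (QF F) bs) y)))) S"
  shows "nonadaptive_tester n q T" "\<And>f. accept_prob T f = measure_pmf.prob S {F. \<Phi> F f}"
proof -
  show "nonadaptive_tester n q T"
    unfolding nonadaptive_tester_def T_def using q by auto
next
  fix f
  have eq: "(\<lambda>F. (QF F, \<lambda>bs. \<Phi> F (\<lambda>y. the (map_of (zip (QF F) bs) y)))) -` {(Q, d). d (map f Q)}
      = {F. \<Phi> F f}"
  proof (intro set_eqI)
    fix F
    have "\<Phi> F (\<lambda>y. the (map_of (zip (QF F) (map f (QF F))) y)) = \<Phi> F f"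
      by (rule loc) (simp add: map_of_zip_map)
    then show "F \<in> (\<lambda>F. (QF F, \<lambda>bs. \<Phi> F (\<lambda>y. the (map_of (zip (QF F) bs) y)))) -` {(Q, d). d (map f Q)}
      \<longleftrightarrow> F \<in> {F. \<Phi> F f}" by simp
  qed
  show "accept_prob T f = measure_pmf.prob S {F. \<Phi> F f}"
    unfolding accept_prob_def T_def measure_map_pmf eq ..
qed

lemma bool_pmf_bernoulli:
  fixes P :: "'a pmf"
  shows "map_pmf Y P = bernoulli_pmf (measure_pmf.prob P {a. Y a})"
proof (rule pmf_eqI)
  fix b :: bool
  define p where "p = measure_pmf.prob P {a. Y a}"
  have p01: "0 \<le> p" "p \<le> 1" unfolding p_def by auto
  show "pmf (map_pmf Y P) b = pmf (bernoulli_pmf (measure_pmf.prob P {a. Y a})) b"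
  proof (cases b)
    case True
    have "Y -` {True} = {a. Y a}" by auto
    then show ?thesis using True p01 by (simp add: pmf_map p_def[symmetric])
  next
    case False
    have "Y -` {False} = UNIV - {a. Y a}" by auto
    moreover have "measure_pmf.prob P (UNIV - {a. Y a}) = 1 - p"
      using measure_pmf.prob_compl[of "{a. Y a}" P] by (simp add: p_def)
    ultimately have "pmf (map_pmf Y P) False = 1 - p"
      by (simp add: pmf_map)
    then show ?thesis using False p01 by (simp add: p_def[symmetric])
  qed
qed

lemma iid_count_binomial:
  fixes P :: "'a pmf"
  shows "map_pmf (\<lambda>F. card {i\<in>{..<s}. Y (F i)}) (Pi_pmf {..<s} d (\<lambda>_. P))
       = binomial_pmf s (measure_pmf.prob P {a. Y a})"
proof -
  define p where "p = measure_pmf.prob P {a. Y a}"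
  have p01: "p \<in> {0..1}" unfolding p_def by auto
  have "Pi_pmf {..<s} (Y d) (\<lambda>_. map_pmf Y P) = map_pmf (\<lambda>h. Y \<circ> h) (Pi_pmf {..<s} d (\<lambda>_. P))"
    by (rule Pi_pmf_map) auto
  then have "map_pmf (\<lambda>F. card {i\<in>{..<s}. Y (F i)}) (Pi_pmf {..<s} d (\<lambda>_. P))
      = map_pmf (\<lambda>f. card {i\<in>{..<s}. f i}) (Pi_pmf {..<s} (Y d) (\<lambda>_. bernoulli_pmf p))"
    by (simp add: pmf.map_comp o_def bool_pmf_bernoulli p_def)
  also have "\<dots> = binomial_pmf s p"
    by (rule binomial_pmf_altdef'[symmetric]) (use p01 in auto)
  finally show ?thesis unfolding p_def .
qed

lemma iid_tail:
  fixes P :: "'a pmf" and Y :: "'a \<Rightarrow> bool" and s :: nat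
  assumes s: "s > 0" and \<delta>: "\<delta> \<ge> 0"
  defines "p \<equiv> measure_pmf.prob P {a. Y a}"
  shows "measure_pmf.prob (Pi_pmf {..<s} d (\<lambda>_. P)) {F. real (card {i\<in>{..<s}. Y (F i)}) / real s \<ge> p + \<delta>}
           \<le> exp (- 2 * real s * \<delta>\<^sup>2)"
    and "measure_pmf.prob (Pi_pmf {..<s} d (\<lambda>_. P)) {F. real (card {i\<in>{..<s}. Y (F i)}) / real s \<le> p - \<delta>}
           \<le> exp (- 2 * real s * \<delta>\<^sup>2)"
proof -
  have p01: "p \<in> {0..1}" unfolding p_def by auto
  interpret binomial_distribution s p by unfold_locales (rule p01)
  have B: "map_pmf (\<lambda>F. card {i\<in>{..<s}. Y (F i)}) (Pi_pmf {..<s} d (\<lambda>_. P)) = binomial_pmf s p"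
    unfolding p_def by (rule iid_count_binomial)
  have "measure_pmf.prob (Pi_pmf {..<s} d (\<lambda>_. P)) {F. real (card {i\<in>{..<s}. Y (F i)}) / real s \<ge> p + \<delta>}
      = measure_pmf.prob (map_pmf (\<lambda>F. card {i\<in>{..<s}. Y (F i)}) (Pi_pmf {..<s} d (\<lambda>_. P))) {x. real x / real s \<ge> p + \<delta>}"
    by (simp add: measure_map_pmf vimage_def)
  also have "\<dots> \<le> exp (- 2 * real s * \<delta>\<^sup>2)" unfolding B using prob_ge'[OF s \<delta>] by simp
  finally show "measure_pmf.prob (Pi_pmf {..<s} d (\<lambda>_. P)) {F. real (card {i\<in>{..<s}. Y (F i)}) / real s \<ge> p + \<delta>}
           \<le> exp (- 2 * real s * \<delta>\<^sup>2)" .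
  have "measure_pmf.prob (Pi_pmf {..<s} d (\<lambda>_. P)) {F. real (card {i\<in>{..<s}. Y (F i)}) / real s \<le> p - \<delta>}
      = measure_pmf.prob (map_pmf (\<lambda>F. card {i\<in>{..<s}. Y (F i)}) (Pi_pmf {..<s} d (\<lambda>_. P))) {x. real x / real s \<le> p - \<delta>}"
    by (simp add: measure_map_pmf vimage_def)
  also have "\<dots> \<le> exp (- 2 * real s * \<delta>\<^sup>2)" unfolding B using prob_le'[OF s \<delta>] by simp
  finally show "measure_pmf.prob (Pi_pmf {..<s} d (\<lambda>_. P)) {F. real (card {i\<in>{..<s}. Y (F i)}) / real s \<le> p - \<delta>}
           \<le> exp (- 2 * real s * \<delta>\<^sup>2)" .
qed

lemma miss_prob:
  assumes "finite U" "U \<noteq> {}"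
  shows "measure_pmf.prob (Pi_pmf {..<s} d (\<lambda>_. pmf_of_set U)) {F. \<forall>i<s. F i \<notin> A}
       = (real (card (U - A)) / card U) ^ s"
proof -
  have "{F. \<forall>i<s. F i \<notin> A} = Pi {..<s} (\<lambda>_. - A)" by (auto simp: Pi_def)
  then have "measure_pmf.prob (Pi_pmf {..<s} d (\<lambda>_. pmf_of_set U)) {F. \<forall>i<s. F i \<notin> A}
      = (\<Prod>i\<in>{..<s}. measure_pmf.prob (pmf_of_set U) (- A))"
    by (simp add: measure_Pi_pmf_Pi)
  also have "\<dots> = (real (card (U - A)) / card U) ^ s"
    using assms by (simp add: measure_pmf_of_set Diff_eq)
  finally show ?thesis .
qed

lemma set_Pi_pmf_in:
  fixes s :: nat
  assumes "F \<in> set_pmf (Pi_pmf {..<s} d (\<lambda>_. P))" "i < s"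
  shows "F i \<in> set_pmf P"
proof -
  have "F \<in> PiE_dflt {..<s} d (\<lambda>_. set_pmf P)" using assms(1) set_Pi_pmf[OF finite_lessThan[of s], of d "\<lambda>_. P"] by simp
  then show ?thesis using assms(2) by (auto simp: PiE_dflt_def)
qed

definition gch :: "nat \<Rightarrow> nat \<Rightarrow> bool \<Rightarrow> (nat \<Rightarrow> bool) \<Rightarrow> nat set" where
  "gch n a v0 g = {y\<in>{a..n}. g y \<noteq> (if y = a then v0 else g (y - 1))}"

lemma gch_chg: "gch n 1 False g = chg n g"
  unfolding gch_def chg_def fz_def by (intro set_eqI) auto

lemma greedy:
  assumes m: "m \<ge> 1"
  shows "(\<exists>A::nat \<Rightarrow> nat set. (\<forall>i<j. A i \<subseteq> {a..n} \<and> card (A i) \<ge> m \<and> (\<forall>y\<in>A i. f y = (b = even i)))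
            \<and> (\<forall>i. Suc i < j \<longrightarrow> (\<forall>y\<in>A i. \<forall>y'\<in>A (Suc i). y < y')))
        \<or> (\<exists>g. card (gch n a (\<not> b) g) \<le> j - 1 \<and> card {y\<in>{a..n}. f y \<noteq> g y} \<le> j * (m - 1))"
proof (induction j arbitrary: a b)
  case 0
  show ?case by (intro disjI1 exI[of _ "\<lambda>_. {}"]) simp
next
  case (Suc j a b)
  define B where "B = {y\<in>{a..n}. f y = b}"
  have finB: "finite B" unfolding B_def by simp
  show ?case
  proof (cases "card B < m")
    case True
    have "gch n a (\<not> b) (\<lambda>_. \<not> b) = {}" unfolding gch_def by auto
    moreover have "{y\<in>{a..n}. f y \<noteq> (\<not> b)} = B" unfolding B_def by auto
    moreover have "card B \<le> Suc j * (m - 1)"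
    proof -
      have "card B \<le> m - 1" using True by simp
      also have "\<dots> \<le> Suc j * (m - 1)" by simp
      finally show ?thesis .
    qed
    ultimately show ?thesis
      by (intro disjI2 exI[of _ "\<lambda>_. \<not> b"]) simp
  next
    case False
    then have cB: "m \<le> card B" by simp
    define z where "z = (LEAST z. m \<le> card {y\<in>B. y \<le> z})"
    have "{y\<in>B. y \<le> n} = B" unfolding B_def by auto
    then have ex: "m \<le> card {y\<in>B. y \<le> n}" using cB by simp
    have zP: "m \<le> card {y\<in>B. y \<le> z}" unfolding z_def by (rule LeastI[of _ n]) (rule ex)
    have zle: "z \<le> n" unfolding z_def by (rule Least_le) (rule ex)
    have below: "card {y\<in>B. y < z} \<le> m - 1"
    proof (cases "z = 0")
      case True then show ?thesis by simp
    next
      case False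
      have "\<not> m \<le> card {y\<in>B. y \<le> z - 1}"
        using not_less_Least[of "z - 1" "\<lambda>z. m \<le> card {y\<in>B. y \<le> z}"] False unfolding z_def by simp
      moreover have "{y\<in>B. y \<le> z - 1} = {y\<in>B. y < z}" using False by auto
      ultimately show ?thesis by simp
    qed
    have zB: "z \<in> B"
    proof (rule ccontr)
      assume "z \<notin> B"
      then have eq: "{y\<in>B. y \<le> z} = {y\<in>B. y < z}" by (auto simp: le_less)
      then show False using zP below m by simp
    qed
    have za: "a \<le> z" using zB unfolding B_def by simp
    define A0 where "A0 = {y\<in>B. y \<le> z}"
    show ?thesis
    proof (cases "\<exists>A::nat \<Rightarrow> nat set. (\<forall>i<j. A i \<subseteq> {Suc z..n} \<and> card (A i) \<ge> m \<and> (\<forall>y\<in>A i. f y = ((\<not> b) = even i)))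
            \<and> (\<forall>i. Suc i < j \<longrightarrow> (\<forall>y\<in>A i. \<forall>y'\<in>A (Suc i). y < y'))")
      case True
      then obtain A' where A'1: "\<forall>i<j. A' i \<subseteq> {Suc z..n} \<and> card (A' i) \<ge> m \<and> (\<forall>y\<in>A' i. f y = ((\<not> b) = even i))"
        and A'2: "\<forall>i. Suc i < j \<longrightarrow> (\<forall>y\<in>A' i. \<forall>y'\<in>A' (Suc i). y < y')" by blast
      define A where "A i = (if i = 0 then A0 else A' (i - 1))" for i
      have P1: "A i \<subseteq> {a..n} \<and> card (A i) \<ge> m \<and> (\<forall>y\<in>A i. f y = (b = even i))" if i: "i < Suc j" for i
      proof (cases i)
        case 0 then show ?thesis using zP unfolding A_def A0_def B_def by auto
      next
        case (Suc i')
        then have "i' < j" using i by simp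
        then have "A' i' \<subseteq> {Suc z..n}" "card (A' i') \<ge> m" "\<forall>y\<in>A' i'. f y = ((\<not> b) = even i')"
          using A'1 by auto
        then show ?thesis using Suc za unfolding A_def by auto
      qed
      have P2: "\<forall>y\<in>A i. \<forall>y'\<in>A (Suc i). y < y'" if i: "Suc i < Suc j" for i
      proof (cases i)
        case 0
        have "A' 0 \<subseteq> {Suc z..n}" using A'1 i 0 by auto
        then show ?thesis using 0 unfolding A_def A0_def by fastforce
      next
        case (Suc i')
        then show ?thesis using A'2 i unfolding A_def by simp
      qed
      have "(\<forall>i<Suc j. A i \<subseteq> {a..n} \<and> card (A i) \<ge> m \<and> (\<forall>y\<in>A i. f y = (b = even i)))
            \<and> (\<forall>i. Suc i < Suc j \<longrightarrow> (\<forall>y\<in>A i. \<forall>y'\<in>A (Suc i). y < y'))"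
        using P1 P2 by blast
      then show ?thesis by blast
    next
      case False
      then obtain g' where g'1: "card (gch n (Suc z) (\<not> \<not> b) g') \<le> j - 1"
        and g'2: "card {y\<in>{Suc z..n}. f y \<noteq> g' y} \<le> j * (m - 1)"
        using Suc.IH[of "Suc z" "\<not> b"] by blast
      have j0: "j \<noteq> 0" using False by (intro notI) (auto intro!: exI[of _ "\<lambda>_. {}"])
      define g where "g y = (if y < z then \<not> b else if y = z then b else g' y)" for y
      have sub1: "gch n a (\<not> b) g \<subseteq> insert z (gch n (Suc z) b g')"
      proof
        fix y assume y: "y \<in> gch n a (\<not> b) g"
        then have ya: "a \<le> y" "y \<le> n" and yc: "g y \<noteq> (if y = a then \<not> b else g (y - 1))"
          unfolding gch_def by auto
        show "y \<in> insert z (gch n (Suc z) b g')"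
        proof (cases "y \<le> z")
          case True
          then have "y = z" using yc za ya unfolding g_def by (auto split: if_splits)
          then show ?thesis by simp
        next
          case False
          then have "y \<ge> Suc z" by simp
          moreover have "g' y \<noteq> (if y = Suc z then b else g' (y - 1))"
            using yc False za unfolding g_def by (auto split: if_splits)
          ultimately show ?thesis using ya unfolding gch_def by auto
        qed
      qed
      have "card (gch n a (\<not> b) g) \<le> card (insert z (gch n (Suc z) b g'))"
        by (rule card_mono[OF _ sub1]) (simp add: gch_def)
      also have "\<dots> \<le> Suc (card (gch n (Suc z) b g'))" by (rule card_insert_le_m1) (simp_all add: gch_def)
      also have "\<dots> \<le> Suc j - 1" using g'1 j0 by simp
      finally have c1: "card (gch n a (\<not> b) g) \<le> Suc j - 1" .
      have sub2: "{y\<in>{a..n}. f y \<noteq> g y} \<subseteq> {y\<in>B. y < z} \<union> {y\<in>{Suc z..n}. f y \<noteq> g' y}"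
        using zB unfolding g_def B_def by auto
      have "card {y\<in>{a..n}. f y \<noteq> g y} \<le> card ({y\<in>B. y < z} \<union> {y\<in>{Suc z..n}. f y \<noteq> g' y})"
        by (rule card_mono[OF _ sub2]) (simp add: finB)
      also have "\<dots> \<le> card {y\<in>B. y < z} + card {y\<in>{Suc z..n}. f y \<noteq> g' y}" by (rule card_Un_le)
      also have "\<dots> \<le> (m - 1) + j * (m - 1)" using below g'2 by linarith
      also have "\<dots> = Suc j * (m - 1)" by simp
      finally show ?thesis using c1 by blast
    qed
  qed
qed

lemma prob_one_AE:
  assumes "\<And>x. x \<in> set_pmf M \<Longrightarrow> P x"
  shows "measure_pmf.prob M {x. P x} = 1"
  using assms by (subst measure_pmf.prob_eq_1) (auto intro!: AE_pmfI)

lemma one_minus_pow_le_exp: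
  fixes x :: real
  assumes "0 \<le> x" "x \<le> 1"
  shows "(1 - x) ^ s \<le> exp (- x * s)"
proof -
  have "(1 - x) ^ s \<le> exp (- x) ^ s"
    using assms by (intro power_mono) (auto simp: exp_ge_add_one_self[of "-x", simplified] add.commute)
  also have "\<dots> = exp (- x * s)" by (simp add: exp_of_nat_mult[symmetric] mult.commute)
  finally show ?thesis .
qed

lemma regime_a:
  fixes n k :: nat and \<epsilon> :: real
  assumes n: "n \<ge> 1" and k: "k \<ge> 1" and e: "0 < \<epsilon>" "\<epsilon> \<le> 1"
  defines "s \<equiv> nat \<lceil>(k + 1) / \<epsilon> * ln (3 * (k + 1))\<rceil>"
  shows "\<exists>T. nonadaptive_tester n s T \<and> (\<forall>f. k_monotone n k f \<longrightarrow> accept_prob T f \<ge> 2/3) \<and>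
            (\<forall>f. far_from_k_monotone n k \<epsilon> f \<longrightarrow> 1 - accept_prob T f \<ge> 2/3)"
proof -
  define S where "S = Pi_pmf {..<s} 0 (\<lambda>_. pmf_of_set {1..n})"
  define QF where "QF F = map F [0..<s]" for F :: "nat \<Rightarrow> nat"
  define \<Phi> where "\<Phi> F h = (\<not> (\<exists>x. (\<forall>i\<in>{1..k+1}. x i \<in> set (QF F)) \<and> (\<forall>i\<in>{1..k}. x i \<le> x (i+1)) \<and>
      h (x 1) \<and> (\<forall>i\<in>{1..k}. h (x i) \<noteq> h (x (i+1)))))" for F h
  have supp: "F t \<in> {1..n}" if "F \<in> set_pmf S" "t < s" for F t
  proof -
    have "F \<in> set_pmf (Pi_pmf {..<s} 0 (\<lambda>_. pmf_of_set {1..n}))" using that(1) S_def by simp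
    from set_Pi_pmf_in[OF this that(2)] have "F t \<in> set_pmf (pmf_of_set {1..n})" .
    then show ?thesis using n by simp
  qed
  have q: "length (QF F) \<le> s \<and> set (QF F) \<subseteq> {1..n}" if "F \<in> set_pmf S" for F
  proof
    show "length (QF F) \<le> s" unfolding QF_def by simp
    show "set (QF F) \<subseteq> {1..n}"
    proof
      fix y assume "y \<in> set (QF F)"
      then obtain t where "t < s" "y = F t" unfolding QF_def by auto
      then show "y \<in> {1..n}" using supp[OF that] by simp
    qed
  qed
  have loc: "\<Phi> F h = \<Phi> F h'" if hh: "\<And>y. y \<in> set (QF F) \<Longrightarrow> h y = h' y" for F h h'
  proof -
    have eqx: "((\<forall>i\<in>{1..k+1}. x i \<in> set (QF F)) \<and> (\<forall>i\<in>{1..k}. x i \<le> x (i+1)) \<and> h (x 1) \<and> (\<forall>i\<in>{1..k}. h (x i) \<noteq> h (x (i+1))))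
      = ((\<forall>i\<in>{1..k+1}. x i \<in> set (QF F)) \<and> (\<forall>i\<in>{1..k}. x i \<le> x (i+1)) \<and> h' (x 1) \<and> (\<forall>i\<in>{1..k}. h' (x i) \<noteq> h' (x (i+1))))" for x
    proof (cases "\<forall>i\<in>{1..k+1}. x i \<in> set (QF F)")
      case False then show ?thesis by blast
    next
      case True
      have hx: "h (x i) = h' (x i)" if "i \<in> {1..k+1}" for i
        using True that hh by blast
      have e1: "h (x 1) = h' (x 1)" using hx[of 1] by simp
      have e2: "(\<forall>i\<in>{1..k}. h (x i) \<noteq> h (x (i+1))) = (\<forall>i\<in>{1..k}. h' (x i) \<noteq> h' (x (i+1)))"
      proof (rule ball_cong[OF refl])
        fix i assume "i \<in> {1..k}"
        then have "i \<in> {1..k+1}" "i + 1 \<in> {1..k+1}" by auto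
        then show "(h (x i) \<noteq> h (x (i+1))) = (h' (x i) \<noteq> h' (x (i+1)))" using hx by metis
      qed
      show ?thesis using e1 e2 by simp
    qed
    show ?thesis unfolding \<Phi>_def by (simp only: eqx)
  qed
  define T where "T = map_pmf (\<lambda>F. (QF F, \<lambda>bs. \<Phi> F (\<lambda>y. the (map_of (zip (QF F) bs) y)))) S"
  have T1: "nonadaptive_tester n s T"
    unfolding T_def by (rule tester_from_seed(1)[OF q loc])
  have T2: "accept_prob T f = measure_pmf.prob S {F. \<Phi> F f}" for f
    unfolding T_def by (rule tester_from_seed(2)[OF q loc])
  have compl: "accept_prob T f \<ge> 2/3" if f: "k_monotone n k f" for f
  proof -
    have "measure_pmf.prob S {F. \<Phi> F f} = 1"
    proof (rule prob_one_AE)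
      fix F assume "F \<in> set_pmf S"
      then have sq: "set (QF F) \<subseteq> {1..n}" using q by blast
      show "\<Phi> F f" unfolding \<Phi>_def
      proof
        assume "\<exists>x. (\<forall>i\<in>{1..k+1}. x i \<in> set (QF F)) \<and> (\<forall>i\<in>{1..k}. x i \<le> x (i+1)) \<and>
           f (x 1) \<and> (\<forall>i\<in>{1..k}. f (x i) \<noteq> f (x (i+1)))"
        then obtain x where x: "\<forall>i\<in>{1..k+1}. x i \<in> set (QF F)" "\<forall>i\<in>{1..k}. x i \<le> x (i+1)"
          "f (x 1)" "\<forall>i\<in>{1..k}. f (x i) \<noteq> f (x (i+1))" by blast
        have "\<forall>i\<in>{1..k+1}. x i \<in> {1..n}" using x(1) sq by blast
        moreover have nx: "\<not> (\<exists>x. (\<forall>i\<in>{1..k+1}. x i \<in> {1..n}) \<and> (\<forall>i\<in>{1..k}. x i \<le> x (i+1)) \<and>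
           f (x 1) \<and> (\<forall>i\<in>{1..k}. f (x i) \<noteq> f (x (i+1))))" using f unfolding k_monotone_def .
        ultimately show False using x(2-4) by blast
      qed
    qed
    then show ?thesis using T2 by simp
  qed
  have sound: "1 - accept_prob T f \<ge> 2/3" if far: "far_from_k_monotone n k \<epsilon> f" for f
  proof -
    define m where "m = nat \<lceil>\<epsilon> * n / (k + 1)\<rceil>"
    have pos: "\<epsilon> * n / (k + 1) > 0" using e n by simp
    then have "1 \<le> \<lceil>\<epsilon> * n / (k + 1)\<rceil>" by (simp add: one_le_ceiling)
    then have m1: "m \<ge> 1" unfolding m_def by linarith
    have mlt: "real (m - 1) < \<epsilon> * n / (k + 1)"
    proof -
      have "real m = of_int \<lceil>\<epsilon> * n / (k + 1)\<rceil>" unfolding m_def using pos by simp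
      then have "real m < \<epsilon> * n / (k + 1) + 1" using ceiling_correct[of "\<epsilon> * n / (k + 1)"] by linarith
      then show ?thesis using m1 by simp
    qed
    have mge: "real m \<ge> \<epsilon> * n / (k + 1)" unfolding m_def by linarith
    from greedy[OF m1, of "k+1" 1 n f True]
    have "\<exists>A::nat \<Rightarrow> nat set. (\<forall>i<k+1. A i \<subseteq> {1..n} \<and> card (A i) \<ge> m \<and> (\<forall>y\<in>A i. f y = (True = even i)))
            \<and> (\<forall>i. Suc i < k+1 \<longrightarrow> (\<forall>y\<in>A i. \<forall>y'\<in>A (Suc i). y < y'))"
    proof
      assume "\<exists>g. card (gch n 1 (\<not> True) g) \<le> k + 1 - 1 \<and> card {y \<in> {1..n}. f y \<noteq> g y} \<le> (k + 1) * (m - 1)"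
      then obtain g where g1: "cc n g \<le> k" and g2: "dcard n f g \<le> (k + 1) * (m - 1)"
        unfolding cc_def dcard_def using gch_chg[of n] by auto
      have "\<epsilon> * n \<le> real (dcard n f g)" by (rule far_imp[OF far n g1])
      also have "\<dots> \<le> real ((k + 1) * (m - 1))" using g2 by linarith
      also have "\<dots> = (k + 1) * real (m - 1)" unfolding of_nat_mult by simp
      also have "\<dots> < (k + 1) * (\<epsilon> * n / (k + 1))" using mlt by (intro mult_strict_left_mono) auto
      also have "\<dots> = \<epsilon> * n" by simp
      finally show ?thesis by simp
    qed
    then obtain A :: "nat \<Rightarrow> nat set" where A1: "\<And>i. i < k+1 \<Longrightarrow> A i \<subseteq> {1..n} \<and> card (A i) \<ge> m \<and> (\<forall>y\<in>A i. f y = even i)"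
      and A2: "\<And>i. Suc i < k+1 \<Longrightarrow> (\<forall>y\<in>A i. \<forall>y'\<in>A (Suc i). y < y')" by auto
    have sub: "{F. \<Phi> F f} \<subseteq> (\<Union>i\<in>{..k}. {F. \<forall>t<s. F t \<notin> A i})"
    proof
      fix F assume Fphi: "F \<in> {F. \<Phi> F f}"
      show "F \<in> (\<Union>i\<in>{..k}. {F. \<forall>t<s. F t \<notin> A i})"
      proof (rule ccontr)
        assume "F \<notin> (\<Union>i\<in>{..k}. {F. \<forall>t<s. F t \<notin> A i})"
        then have "\<forall>i\<in>{..k}. \<exists>t. t < s \<and> F t \<in> A i" by auto
        from bchoice[OF this] obtain t where t: "\<forall>i\<in>{..k}. t i < s \<and> F (t i) \<in> A i" by auto
        define x where "x i = F (t (i - 1))" for i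
        have xin: "x i \<in> A (i - 1)" "x i \<in> set (QF F)" if "i \<in> {1..k+1}" for i
          using t that unfolding x_def QF_def by auto
        have "(\<forall>i\<in>{1..k+1}. x i \<in> set (QF F)) \<and> (\<forall>i\<in>{1..k}. x i \<le> x (i+1)) \<and>
            f (x 1) \<and> (\<forall>i\<in>{1..k}. f (x i) \<noteq> f (x (i+1)))"
        proof (intro conjI ballI)
          fix i assume "i \<in> {1..k+1}" then show "x i \<in> set (QF F)" by (rule xin)
        next
          fix i assume i: "i \<in> {1..k}"
          have "x i \<in> A (i - 1)" "x (i+1) \<in> A i" using xin[of i] xin[of "i+1"] i by auto
          moreover have "Suc (i - 1) < k + 1" "Suc (i - 1) = i" using i by auto
          ultimately show "x i \<le> x (i + 1)" using A2[of "i - 1"] by (metis less_imp_le)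
        next
          have "x 1 \<in> A 0" using xin[of 1] by simp
          then show "f (x 1)" using A1[of 0] by auto
        next
          fix i assume i: "i \<in> {1..k}"
          have "x i \<in> A (i - 1)" "x (i+1) \<in> A i" using xin[of i] xin[of "i+1"] i by auto
          then have "f (x i) = even (i - 1)" "f (x (i+1)) = even i" using A1[of "i - 1"] A1[of i] i by auto
          moreover have "even (i - 1) \<noteq> even i" using i by (cases i) auto
          ultimately show "f (x i) \<noteq> f (x (i + 1))" by simp
        qed
        then show False using Fphi unfolding \<Phi>_def by blast
      qed
    qed
    have "measure_pmf.prob S {F. \<Phi> F f} \<le> measure_pmf.prob S (\<Union>i\<in>{..k}. {F. \<forall>t<s. F t \<notin> A i})"
      by (rule measure_pmf.finite_measure_mono[OF sub]) simp
    also have "\<dots> \<le> (\<Sum>i\<in>{..k}. measure_pmf.prob S {F. \<forall>t<s. F t \<notin> A i})"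
      by (rule measure_pmf.finite_measure_subadditive_finite) auto
    also have "\<dots> \<le> (\<Sum>i\<in>{..k}. exp (- (\<epsilon> / (k + 1)) * s))"
    proof (rule sum_mono)
      fix i assume i: "i \<in> {..k}"
      have Ai: "A i \<subseteq> {1..n}" "card (A i) \<ge> m" using A1[of i] i by auto
      have "measure_pmf.prob S {F. \<forall>t<s. F t \<notin> A i} = (real (card ({1..n} - A i)) / card {1..n}) ^ s"
        unfolding S_def using n by (intro miss_prob) auto
      also have "real (card ({1..n} - A i)) / card {1..n} = 1 - real (card (A i)) / n"
      proof -
        have "card ({1..n} - A i) = n - card (A i)" using Ai by (simp add: card_Diff_subset finite_subset)
        moreover have "card (A i) \<le> n" using Ai card_mono[of "{1..n}" "A i"] by simp
        ultimately show ?thesis using n by (simp add: field_simps of_nat_diff)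
      qed
      also have "(1 - real (card (A i)) / n) ^ s \<le> (1 - \<epsilon> / (k + 1)) ^ s"
      proof (rule power_mono)
        have "\<epsilon> / (k + 1) = (\<epsilon> * n / (k + 1)) / n" using n by simp
        also have "\<dots> \<le> real (card (A i)) / n" using mge Ai n by (intro divide_right_mono) auto
        finally show "1 - real (card (A i)) / n \<le> 1 - \<epsilon> / (k + 1)" by simp
        have "card (A i) \<le> n" using Ai card_mono[of "{1..n}" "A i"] by simp
        then show "0 \<le> 1 - real (card (A i)) / n" using n by simp
      qed
      also have "\<dots> \<le> exp (- (\<epsilon> / (k + 1)) * s)"
        by (rule one_minus_pow_le_exp) (use e in \<open>auto simp: field_simps\<close>)
      finally show "measure_pmf.prob S {F. \<forall>t<s. F t \<notin> A i} \<le> exp (- (\<epsilon> / (k + 1)) * s)" .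
    qed
    also have "\<dots> = (k + 1) * exp (- (\<epsilon> / (k + 1)) * s)" by simp
    also have "\<dots> \<le> (k + 1) * exp (- ln (3 * (k + 1)))"
    proof -
      have "real s \<ge> (k + 1) / \<epsilon> * ln (3 * (k + 1))" unfolding s_def by linarith
      then have "(\<epsilon> / (k + 1)) * s \<ge> (\<epsilon> / (k + 1)) * ((k + 1) / \<epsilon> * ln (3 * (k + 1)))"
        using e by (intro mult_left_mono) auto
      also have "(\<epsilon> / (k + 1)) * ((k + 1) / \<epsilon> * ln (3 * (k + 1))) = ln (3 * (k + 1))" using e by simp
      finally show ?thesis by (intro mult_left_mono) auto
    qed
    also have "\<dots> = 1 / 3"
    proof -
      have "exp (- ln (3 * (real k + 1))) = 1 / (3 * (real k + 1))"
        by (simp add: exp_minus inverse_eq_divide)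
      then show ?thesis by (simp add: field_simps)
    qed
    finally show ?thesis using T2 by simp
  qed
  show ?thesis using T1 compl sound by blast
qed

lemma cnt_cc:
  fixes n :: nat and f :: "nat \<Rightarrow> bool"
  defines "D \<equiv> {x\<in>{1..n-1}. f x \<noteq> f (x + 1)}"
  shows "card D \<le> cc n f" "cc n f \<le> card D + 1"
proof -
  have "Suc ` D \<subseteq> chg n f" unfolding D_def chg_def fz_def by auto
  then have "card (Suc ` D) \<le> cc n f" unfolding cc_def by (intro card_mono) auto
  then show "card D \<le> cc n f" by (simp add: card_image)
  have "chg n f \<subseteq> insert 1 (Suc ` D)"
  proof
    fix i assume i: "i \<in> chg n f"
    show "i \<in> insert 1 (Suc ` D)"
    proof (cases "i = 1")
      case False
      then have "i \<ge> 2" using i chg_sub by fastforce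
      then have "i - 1 \<in> D" "i = Suc (i - 1)" using i unfolding D_def chg_def fz_def by auto
      then show ?thesis by blast
    qed simp
  qed
  then have "cc n f \<le> card (insert 1 (Suc ` D))" unfolding cc_def by (intro card_mono) (auto simp: D_def)
  also have "\<dots> \<le> card (Suc ` D) + 1" by (simp add: card_insert_le_m1 D_def card_insert_if)
  also have "\<dots> = card D + 1" by (simp add: card_image)
  finally show "cc n f \<le> card D + 1" .
qed

lemma far_cc_gt:
  assumes far: "far_from_k_monotone n k \<epsilon> f" and n: "n \<ge> 1" and e: "\<epsilon> > 0"
  shows "cc n f > k"
proof (rule ccontr)
  assume "\<not> k < cc n f"
  then have "cc n f \<le> k" by simp
  from far_imp[OF far n this] have "\<epsilon> * n \<le> real (dcard n f f)" .
  moreover have "dcard n f f = 0" unfolding dcard_def by simp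
  moreover have "\<epsilon> * n > 0" using e n by simp
  ultimately show False by simp
qed

lemma far_cc_bound:
  assumes far: "far_from_k_monotone n k \<epsilon> f" and n: "n \<ge> 2" and k: "k \<ge> 1" and e: "\<epsilon> > 0"
  shows "real (cc n f) \<ge> k + 2 * \<epsilon> * k - 1"
proof -
  have gt: "cc n f > k" by (rule far_cc_gt[OF far _ e]) (use n in simp)
  obtain g where g: "cc n g \<le> k" "dcard n f g \<le> ((cc n f - k + 1) div 2) * ((n - 1) div k)"
    using reduce_changes[OF k] by blast
  have "\<epsilon> * n \<le> real (dcard n f g)" by (rule far_imp[OF far _ g(1)]) (use n in simp)
  also have "\<dots> \<le> real ((cc n f - k + 1) div 2) * real ((n - 1) div k)"
  proof -
    have "real (dcard n f g) \<le> real (((cc n f - k + 1) div 2) * ((n - 1) div k))" using g(2) by (simp only: of_nat_le_iff)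
    then show ?thesis by (simp only: of_nat_mult)
  qed
  also have "\<dots> \<le> (real (cc n f - k + 1) / 2) * (real (n - 1) / k)"
  proof (intro mult_mono)
    show "real ((cc n f - k + 1) div 2) \<le> real (cc n f - k + 1) / 2" using of_nat_div_le_of_nat[of _ 2] by simp
    show "real ((n - 1) div k) \<le> real (n - 1) / k" by (rule of_nat_div_le_of_nat)
  qed auto
  finally have A: "\<epsilon> * n \<le> (real (cc n f - k + 1) / 2) * (real (n - 1) / k)" .
  have r: "real (cc n f - k + 1) = real (cc n f) - k + 1" using gt by simp
  have n1: "real (n - 1) > 0" "real (n - 1) \<le> n" using n by auto
  have "\<epsilon> * real (n - 1) \<le> \<epsilon> * n" using e n1 by simp
  also have "\<dots> \<le> ((real (cc n f) - k + 1) / (2 * k)) * real (n - 1)" using A r by (simp add: field_simps)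
  finally have "\<epsilon> * real (n - 1) \<le> ((real (cc n f) - k + 1) / (2 * k)) * real (n - 1)" .
  then have "\<epsilon> \<le> (real (cc n f) - k + 1) / (2 * k)" using n1(1) by (rule mult_right_le_imp_le)
  moreover have "(0::real) < 2 * k" using k by simp
  ultimately have "\<epsilon> * (2 * k) \<le> real (cc n f) - k + 1" using pos_le_divide_eq by blast
  then show ?thesis by (simp add: algebra_simps)
qed


lemma length_concat_pairs: "length (concat (map (\<lambda>i. [a i, b i]) xs)) = 2 * length xs"
  by (induction xs) auto

lemma exp_neg2_le: "exp (-2::real) \<le> 1/3"
proof -
  have "3 \<le> exp (2::real)" using exp_ge_add_one_self[of 2] by simp
  then show ?thesis by (simp add: exp_minus inverse_eq_divide field_simps)
qed

lemma hoeff_third: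
  fixes s :: nat and \<delta> :: real
  assumes "real s * \<delta>\<^sup>2 \<ge> 1"
  shows "exp (- 2 * real s * \<delta>\<^sup>2) \<le> 1/3"
proof -
  have "exp (- 2 * real s * \<delta>\<^sup>2) \<le> exp (-2)" using assms by simp
  then show ?thesis using exp_neg2_le by linarith
qed

lemma regime_b1:
  fixes n k :: nat and \<epsilon> B :: real
  assumes n: "n \<ge> 2" and k: "k \<ge> 1" and e: "0 < \<epsilon>" "\<epsilon> \<le> 1" and ek: "\<epsilon> * k \<ge> 2"
    and B: "real n \<le> B * k"
  defines "s \<equiv> nat \<lceil>4 * B\<^sup>2 / \<epsilon>\<^sup>2\<rceil>"
  shows "\<exists>T. nonadaptive_tester n (2 * s) T \<and> (\<forall>f. k_monotone n k f \<longrightarrow> accept_prob T f \<ge> 2/3) \<and>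
            (\<forall>f. far_from_k_monotone n k \<epsilon> f \<longrightarrow> 1 - accept_prob T f \<ge> 2/3)"
proof -
  have Bpos: "B > 0" using B n k by (smt (verit) of_nat_0_le_iff of_nat_le_0_iff mult_nonpos_nonneg not_numeral_le_zero le_trans)
  have s_ge: "real s \<ge> 4 * B\<^sup>2 / \<epsilon>\<^sup>2" unfolding s_def by linarith
  have s_pos: "s > 0"
  proof -
    have "4 * B\<^sup>2 / \<epsilon>\<^sup>2 > 0" using Bpos e by simp
    then show ?thesis using s_ge by linarith
  qed
  define N1 where "N1 = n - 1"
  have N1: "N1 \<ge> 1" "real N1 = real n - 1" using n unfolding N1_def by auto
  define \<delta> where "\<delta> = \<epsilon> * k / (2 * N1)"
  define \<tau> where "\<tau> = k / N1 + \<delta>"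
  have \<delta>pos: "\<delta> \<ge> 0" unfolding \<delta>_def using e by simp
  have s\<delta>: "real s * \<delta>\<^sup>2 \<ge> 1"
  proof -
    have "\<delta> \<ge> \<epsilon> * k / (2 * n)" unfolding \<delta>_def using e N1 k
      by (intro divide_left_mono) auto
    also have "\<epsilon> * k / (2 * n) \<ge> \<epsilon> / (2 * B)"
    proof -
      have "\<epsilon> * n \<le> \<epsilon> * (B * k)" using B e by simp
      then have "\<epsilon> / (2 * B) \<le> \<epsilon> * k / (2 * n)" using Bpos n by (simp add: field_simps)
      then show ?thesis .
    qed
    finally have d: "\<epsilon> / (2 * B) \<le> \<delta>" .
    have "\<delta>\<^sup>2 \<ge> (\<epsilon> / (2 * B))\<^sup>2" using d e Bpos by (intro power_mono) auto
    then have "real s * \<delta>\<^sup>2 \<ge> (4 * B\<^sup>2 / \<epsilon>\<^sup>2) * (\<epsilon> / (2 * B))\<^sup>2"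
      using s_ge by (intro mult_mono) auto
    also have "(4 * B\<^sup>2 / \<epsilon>\<^sup>2) * (\<epsilon> / (2 * B))\<^sup>2 = 1" using e Bpos by (simp add: field_simps power2_eq_square)
    finally show ?thesis .
  qed
  have third: "exp (- 2 * real s * \<delta>\<^sup>2) \<le> 1/3" by (rule hoeff_third[OF s\<delta>])
  define S where "S = Pi_pmf {..<s} 1 (\<lambda>_. pmf_of_set {1..n-1})"
  define QF where "QF F = concat (map (\<lambda>i. [F i, F i + 1]) [0..<s])" for F :: "nat \<Rightarrow> nat"
  define \<Phi> where "\<Phi> F h = (real (card {i\<in>{..<s}. h (F i) \<noteq> h (F i + 1)}) / s < \<tau>)" for F :: "nat \<Rightarrow> nat" and h :: "nat \<Rightarrow> bool"
  have supp: "F t \<in> {1..n-1}" if "F \<in> set_pmf S" "t < s" for F t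
  proof -
    have "F \<in> set_pmf (Pi_pmf {..<s} 1 (\<lambda>_. pmf_of_set {1..n-1}))" using that(1) S_def by simp
    from set_Pi_pmf_in[OF this that(2)] have "F t \<in> set_pmf (pmf_of_set {1..n-1})" .
    then show ?thesis using n by simp
  qed
  have q: "length (QF F) \<le> 2 * s \<and> set (QF F) \<subseteq> {1..n}" if "F \<in> set_pmf S" for F
  proof
    show "length (QF F) \<le> 2 * s" unfolding QF_def by (simp add: length_concat_pairs)
    show "set (QF F) \<subseteq> {1..n}"
    proof
      fix y assume "y \<in> set (QF F)"
      then obtain t where "t < s" "y = F t \<or> y = F t + 1" unfolding QF_def by auto
      then show "y \<in> {1..n}" using supp[OF that \<open>t < s\<close>] n by (cases n) auto
    qed
  qed
  have loc: "\<Phi> F h = \<Phi> F h'" if hh: "\<And>y. y \<in> set (QF F) \<Longrightarrow> h y = h' y" for F h h'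
  proof -
    have "{i\<in>{..<s}. h (F i) \<noteq> h (F i + 1)} = {i\<in>{..<s}. h' (F i) \<noteq> h' (F i + 1)}"
    proof (intro Collect_cong conj_cong refl)
      fix i assume "i \<in> {..<s}"
      then have "F i \<in> set (QF F)" "F i + 1 \<in> set (QF F)" unfolding QF_def by auto
      then show "(h (F i) \<noteq> h (F i + 1)) = (h' (F i) \<noteq> h' (F i + 1))" using hh by simp
    qed
    then show ?thesis unfolding \<Phi>_def by simp
  qed
  define T where "T = map_pmf (\<lambda>F. (QF F, \<lambda>bs. \<Phi> F (\<lambda>y. the (map_of (zip (QF F) bs) y)))) S"
  have T1: "nonadaptive_tester n (2 * s) T"
    unfolding T_def by (rule tester_from_seed(1)[OF q loc])
  have T2: "accept_prob T f = measure_pmf.prob S {F. \<Phi> F f}" for f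
    unfolding T_def by (rule tester_from_seed(2)[OF q loc])
  have pD: "measure_pmf.prob (pmf_of_set {1..n-1}) {x. f x \<noteq> f (x + 1)} = real (card {x\<in>{1..n-1}. f x \<noteq> f (x + 1)}) / N1" for f
  proof -
    have "{1..n-1} \<inter> {x. f x \<noteq> f (x + 1)} = {x\<in>{1..n-1}. f x \<noteq> f (x + 1)}" by auto
    then show ?thesis using n unfolding N1_def by (simp add: measure_pmf_of_set)
  qed
  have compl: "accept_prob T f \<ge> 2/3" if f: "k_monotone n k f" for f
  proof -
    define p where "p = measure_pmf.prob (pmf_of_set {1..n-1}) {x. f x \<noteq> f (x + 1)}"
    have "card {x\<in>{1..n-1}. f x \<noteq> f (x + 1)} \<le> k" using cnt_cc(1)[of n f] kmono_iff f by fastforce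
    then have pk: "p \<le> k / N1" unfolding p_def pD using N1 by (simp add: divide_right_mono)
    have "{F. \<not> \<Phi> F f} \<subseteq> {F. real (card {i\<in>{..<s}. f (F i) \<noteq> f (F i + 1)}) / real s \<ge> p + \<delta>}"
      unfolding \<Phi>_def \<tau>_def using pk by auto
    then have "measure_pmf.prob S {F. \<not> \<Phi> F f} \<le> measure_pmf.prob S {F. real (card {i\<in>{..<s}. f (F i) \<noteq> f (F i + 1)}) / real s \<ge> p + \<delta>}"
      by (rule measure_pmf.finite_measure_mono) simp
    also have "\<dots> \<le> exp (- 2 * real s * \<delta>\<^sup>2)"
      unfolding S_def p_def by (rule iid_tail(1)[OF s_pos \<delta>pos])
    finally have "measure_pmf.prob S {F. \<not> \<Phi> F f} \<le> 1/3" using third by linarith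
    moreover have "measure_pmf.prob S {F. \<not> \<Phi> F f} = 1 - measure_pmf.prob S {F. \<Phi> F f}"
      using measure_pmf.prob_compl[of "{F. \<Phi> F f}" S] by (simp add: Compl_eq_Diff_UNIV[symmetric] Collect_neg_eq)
    ultimately show ?thesis using T2 by simp
  qed
  have sound: "1 - accept_prob T f \<ge> 2/3" if far: "far_from_k_monotone n k \<epsilon> f" for f
  proof -
    define p where "p = measure_pmf.prob (pmf_of_set {1..n-1}) {x. f x \<noteq> f (x + 1)}"
    have "real (cc n f) \<ge> k + 2 * \<epsilon> * k - 1" by (rule far_cc_bound[OF far n k e(1)])
    moreover have "cc n f \<le> card {x\<in>{1..n-1}. f x \<noteq> f (x + 1)} + 1" by (rule cnt_cc(2))
    ultimately have "real (card {x\<in>{1..n-1}. f x \<noteq> f (x + 1)}) \<ge> k + \<epsilon> * k" using ek by linarith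
    then have "p \<ge> (k + \<epsilon> * k) / N1" unfolding p_def pD using N1 by (simp add: divide_right_mono)
    also have "(k + \<epsilon> * k) / N1 = \<tau> + \<delta>" unfolding \<tau>_def \<delta>_def using N1 by (simp add: field_simps)
    finally have pk: "p - \<delta> \<ge> \<tau>" by simp
    have "{F. \<Phi> F f} \<subseteq> {F. real (card {i\<in>{..<s}. f (F i) \<noteq> f (F i + 1)}) / real s \<le> p - \<delta>}"
      unfolding \<Phi>_def using pk by auto
    then have "measure_pmf.prob S {F. \<Phi> F f} \<le> measure_pmf.prob S {F. real (card {i\<in>{..<s}. f (F i) \<noteq> f (F i + 1)}) / real s \<le> p - \<delta>}"
      by (rule measure_pmf.finite_measure_mono) simp
    also have "\<dots> \<le> exp (- 2 * real s * \<delta>\<^sup>2)"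
      unfolding S_def p_def by (rule iid_tail(2)[OF s_pos \<delta>pos])
    finally show ?thesis using third T2 by simp
  qed
  show ?thesis using T1 compl sound by blast
qed

locale win =
  fixes n w \<mu> :: nat and f :: "nat \<Rightarrow> bool"
  assumes mu1: "\<mu> \<ge> 1" and wmu: "2 * \<mu> < w" and wn: "w \<le> n"
begin

definition "N = n + 1 - w"
definition "W x = {x..<x+w}"
definition "ones x = card {y\<in>W x. f y}"
definition "heavy x = (\<mu> \<le> ones x \<and> \<mu> \<le> w - ones x)"
definition "Lt = {x\<in>{1..N}. \<not> heavy x}"
definition "val x = (w - ones x < \<mu>)"
definition "nonval x = {y\<in>W x. f y \<noteq> val x}"
definition "d = w - 2 * \<mu>"

lemma d_pos: "d \<ge> 1" using wmu unfolding d_def by simp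

lemma ones_le: "ones x \<le> w"
proof -
  have "card {y\<in>W x. f y} \<le> card (W x)" by (intro card_mono) (auto simp: W_def)
  then show ?thesis unfolding ones_def W_def by simp
qed

lemma zeros_card: "card {y\<in>W x. \<not> f y} = w - ones x"
proof -
  have "W x = {y\<in>W x. f y} \<union> {y\<in>W x. \<not> f y}" by auto
  moreover have "{y\<in>W x. f y} \<inter> {y\<in>W x. \<not> f y} = {}" by auto
  moreover have "card ({y\<in>W x. f y} \<union> {y\<in>W x. \<not> f y}) = card {y\<in>W x. f y} + card {y\<in>W x. \<not> f y}"
    by (rule card_Un_disjoint) (auto simp: W_def)
  ultimately have "card (W x) = ones x + card {y\<in>W x. \<not> f y}"
    unfolding ones_def by simp
  then show ?thesis unfolding W_def by simp
qed

lemma nonval_light: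
  assumes "\<not> heavy x"
  shows "card (nonval x) < \<mu>"
proof (cases "w - ones x < \<mu>")
  case True
  then have "nonval x = {y\<in>W x. \<not> f y}" unfolding nonval_def val_def by auto
  then show ?thesis using True zeros_card by simp
next
  case False
  then have "ones x < \<mu>" using assms unfolding heavy_def by simp
  moreover have "nonval x = {y\<in>W x. f y}" using False unfolding nonval_def val_def by auto
  ultimately show ?thesis unfolding ones_def by simp
qed

lemma factA:
  assumes "\<not> heavy x" "\<not> heavy x'" "x \<le> x'" "x' \<le> x + d"
  shows "val x = val x'"
proof (rule ccontr)
  assume ne: "val x \<noteq> val x'"
  have sub: "{x'..<x+w} \<subseteq> nonval x \<union> nonval x'"
  proof
    fix y assume y: "y \<in> {x'..<x+w}"
    then have "y \<in> W x" "y \<in> W x'" using assms unfolding W_def by auto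
    then show "y \<in> nonval x \<union> nonval x'" using ne unfolding nonval_def by auto
  qed
  have "card {x'..<x+w} \<le> card (nonval x \<union> nonval x')"
    by (rule card_mono[OF _ sub]) (auto simp: nonval_def W_def)
  also have "\<dots> \<le> card (nonval x) + card (nonval x')" by (rule card_Un_le)
  also have "\<dots> < 2 * \<mu>" using nonval_light[OF assms(1)] nonval_light[OF assms(2)] by simp
  finally have "card {x'..<x+w} < 2 * \<mu>" .
  moreover have "card {x'..<x+w} = x + w - x'" by simp
  moreover have "x + w - x' \<ge> 2 * \<mu>" using assms(4) wmu unfolding d_def by linarith
  ultimately show False by simp
qed

lemma N_ge: "N \<ge> 1" "N + w = n + 1" using wn wmu unfolding N_def by auto

definition "Hv = {x\<in>{1..N}. heavy x}"

lemma main_empty: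
  assumes "Lt = {}"
  shows "\<exists>g. (cc n g - 1) * d \<le> card Hv \<and> dcard n f g \<le> card Hv + \<mu> * (N div d + 1) + w"
proof -
  have "Hv = {1..N}" using assms unfolding Hv_def Lt_def by auto
  then have cH: "card Hv = N" by simp
  have "cc n (\<lambda>_. False) = 0" unfolding cc_def chg_def fz_def by simp
  moreover have "dcard n f (\<lambda>_. False) \<le> n" by (rule dcard_le_n)
  ultimately show ?thesis using cH N_ge by (intro exI[of _ "\<lambda>_. False"]) auto
qed

context
  assumes ne: "Lt \<noteq> {}"
begin

definition "L y = (if \<exists>x\<in>Lt. x \<le> y then Max {x\<in>Lt. x \<le> y} else Min Lt)"
definition "g y = val (L y)"

lemma finLt: "finite Lt" unfolding Lt_def by simp

lemma L_light: "L y = y" if "y \<in> Lt"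
proof -
  have "\<exists>x\<in>Lt. x \<le> y" using that by auto
  moreover have "Max {x\<in>Lt. x \<le> y} = y"
    by (rule Max_eqI) (use that finLt in auto)
  ultimately show ?thesis unfolding L_def by simp
qed

definition "Cg = {y\<in>Lt. \<exists>x0\<in>Lt. x0 < y \<and> val x0 \<noteq> val y \<and> (\<forall>z. x0 < z \<and> z < y \<longrightarrow> z \<notin> Lt)}"

lemma chg_sub_Cg: "chg n g \<subseteq> insert 1 Cg"
proof
  fix y assume y: "y \<in> chg n g"
  show "y \<in> insert 1 Cg"
  proof (cases "y = 1")
    case False
    then have y2: "y \<ge> 2" using y chg_sub by fastforce
    then have gne: "g y \<noteq> g (y - 1)" using y unfolding chg_def fz_def by auto
    then have Lne: "L y \<noteq> L (y - 1)" unfolding g_def by auto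
    show ?thesis
    proof (cases "\<exists>x\<in>Lt. x \<le> y - 1")
      case True
      define x0 where "x0 = Max {x\<in>Lt. x \<le> y - 1}"
      have fin: "finite {x\<in>Lt. x \<le> y - 1}" using finLt by simp
      have nE: "{x\<in>Lt. x \<le> y - 1} \<noteq> {}" using True by auto
      have "x0 \<in> {x\<in>Lt. x \<le> y - 1}" unfolding x0_def by (rule Max_in[OF fin nE])
      then have x0in: "x0 \<in> Lt" "x0 \<le> y - 1" by auto
      have x0max: "x \<le> x0" if "x \<in> Lt" "x \<le> y - 1" for x
        using Max_ge[OF fin] that unfolding x0_def by auto
      have Ly1: "L (y - 1) = x0" unfolding L_def x0_def using True by simp
      have yLt: "y \<in> Lt"
      proof (rule ccontr)
        assume "y \<notin> Lt"
        have "{x\<in>Lt. x \<le> y} = {x\<in>Lt. x \<le> y - 1}"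
        proof (intro Collect_cong)
          fix x show "(x \<in> Lt \<and> x \<le> y) = (x \<in> Lt \<and> x \<le> y - 1)"
            using \<open>y \<notin> Lt\<close> y2 by (cases "x = y") auto
        qed
        moreover have "\<exists>x\<in>Lt. x \<le> y" using True diff_le_self le_trans by blast
        ultimately have "L y = L (y - 1)" unfolding L_def using True by simp
        then show False using Lne by simp
      qed
      have "val x0 \<noteq> val y" using gne Ly1 L_light[OF yLt] unfolding g_def by simp
      moreover have "x0 < y" using x0in y2 by linarith
      moreover have "\<forall>z. x0 < z \<and> z < y \<longrightarrow> z \<notin> Lt"
      proof (intro allI impI notI)
        fix z assume z: "x0 < z \<and> z < y" "z \<in> Lt"
        then have "z \<le> y - 1" by auto
        then have "z \<le> x0" using x0max z(2) by blast
        then show False using z(1) by simp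
      qed
      ultimately show ?thesis using yLt x0in unfolding Cg_def by blast
    next
      case False
      then have Ly1: "L (y - 1) = Min Lt" unfolding L_def by auto
      show ?thesis
      proof (cases "\<exists>x\<in>Lt. x \<le> y")
        case True
        then obtain x where x: "x \<in> Lt" "x \<le> y" by blast
        have "\<not> x \<le> y - 1" using False x(1) by blast
        then have "x = y" using x(2) by linarith
        then have yLt: "y \<in> Lt" using x by simp
        have "Min Lt = y"
          by (rule Min_eqI) (use finLt yLt False in \<open>auto simp: not_le\<close>)
        then have "L y = L (y - 1)" using L_light[OF yLt] Ly1 by simp
        then show ?thesis using Lne by simp
      next
        case F2: False
        then have "L y = Min Lt" unfolding L_def by auto
        then show ?thesis using Ly1 Lne by simp
      qed
    qed
  qed simp
qed

lemma Cg_props: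
  assumes "y \<in> Cg"
  obtains x0 where "x0 \<in> Lt" "x0 + d < y" "\<forall>z. x0 < z \<and> z < y \<longrightarrow> z \<notin> Lt" "y \<in> Lt"
proof -
  from assms obtain x0 where x0: "x0 \<in> Lt" "x0 < y" "val x0 \<noteq> val y" "\<forall>z. x0 < z \<and> z < y \<longrightarrow> z \<notin> Lt" "y \<in> Lt"
    unfolding Cg_def by blast
  have "\<not> y \<le> x0 + d"
  proof
    assume "y \<le> x0 + d"
    then have "val x0 = val y" using factA[of x0 y] x0 unfolding Lt_def by auto
    then show False using x0(3) by simp
  qed
  then show ?thesis using that x0 by simp
qed

lemma Cg_card: "card Cg * d \<le> card Hv"
proof -
  define \<phi> :: "nat \<times> nat \<Rightarrow> nat" where "\<phi> = (\<lambda>(y, t). y - 1 - t)"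
  have img: "\<phi> ` (Cg \<times> {..<d}) \<subseteq> Hv"
  proof
    fix z assume "z \<in> \<phi> ` (Cg \<times> {..<d})"
    then obtain y t where yt: "y \<in> Cg" "t < d" "z = y - 1 - t" unfolding \<phi>_def by auto
    obtain x0 where x0: "x0 \<in> Lt" "x0 + d < y" "\<forall>z. x0 < z \<and> z < y \<longrightarrow> z \<notin> Lt" "y \<in> Lt"
      using Cg_props[OF yt(1)] by blast
    have "x0 < z" "z < y" using yt x0 by auto
    then have "z \<notin> Lt" using x0(3) by blast
    moreover have "z \<in> {1..N}" using \<open>x0 < z\<close> \<open>z < y\<close> x0(4) unfolding Lt_def by auto
    ultimately show "z \<in> Hv" unfolding Hv_def Lt_def by auto
  qed
  have inj: "inj_on \<phi> (Cg \<times> {..<d})"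
  proof (rule inj_onI)
    fix a b assume a: "a \<in> Cg \<times> {..<d}" and b: "b \<in> Cg \<times> {..<d}" and e: "\<phi> a = \<phi> b"
    obtain y t where at: "a = (y, t)" "y \<in> Cg" "t < d" using a by auto
    obtain y' t' where bt: "b = (y', t')" "y' \<in> Cg" "t' < d" using b by auto
    obtain x0 where x0: "x0 \<in> Lt" "x0 + d < y" "\<forall>z. x0 < z \<and> z < y \<longrightarrow> z \<notin> Lt" "y \<in> Lt"
      using Cg_props[OF at(2)] by blast
    obtain x0' where x0': "x0' \<in> Lt" "x0' + d < y'" "\<forall>z. x0' < z \<and> z < y' \<longrightarrow> z \<notin> Lt" "y' \<in> Lt"
      using Cg_props[OF bt(2)] by blast
    have e': "y - 1 - t = y' - 1 - t'" using e at bt unfolding \<phi>_def by simp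
    have "y = y'"
    proof (rule ccontr)
      assume "y \<noteq> y'"
      then consider "y < y'" | "y' < y" by linarith
      then show False
      proof cases
        case 1
        then have "y \<le> x0'" using x0'(3) x0(4) not_le by blast
        then show False using e' x0' bt at by linarith
      next
        case 2
        then have "y' \<le> x0" using x0(3) x0'(4) not_le by blast
        then show False using e' x0 bt at by linarith
      qed
    qed
    then have "t = t'" using e' x0 x0' at bt by linarith
    then show "a = b" using at bt \<open>y = y'\<close> by simp
  qed
  have "card (Cg \<times> {..<d}) = card Cg * d" by (simp add: card_cartesian_product)
  moreover have "card (Cg \<times> {..<d}) = card (\<phi> ` (Cg \<times> {..<d}))" using card_image[OF inj] by simp
  moreover have "card (\<phi> ` (Cg \<times> {..<d})) \<le> card Hv" by (rule card_mono[OF _ img]) (simp add: Hv_def)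
  ultimately show ?thesis by simp
qed

lemma cc_g: "(cc n g - 1) * d \<le> card Hv"
proof -
  have "cc n g \<le> card (insert 1 Cg)" unfolding cc_def
    by (rule card_mono[OF _ chg_sub_Cg]) (simp add: Cg_def finLt)
  also have "\<dots> \<le> card Cg + 1" by (simp add: card_insert_if Cg_def finLt)
  finally have "cc n g - 1 \<le> card Cg" by simp
  then have "(cc n g - 1) * d \<le> card Cg * d" by simp
  then show ?thesis using Cg_card by linarith
qed

lemma div_same:
  fixes a b d :: nat
  assumes "a div d = b div d" "b \<le> a" "d > 0"
  shows "a - b < d"
proof -
  have "a = d * (a div d) + a mod d" by simp
  moreover have "b = d * (a div d) + b mod d" using assms(1) by simp
  moreover have "a mod d < d" using assms by simp
  ultimately show ?thesis by linarith
qed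

lemma Bad_chunk:
  "card {y\<in>Lt. f y \<noteq> val y \<and> (y - 1) div d = c} \<le> \<mu>"
proof (cases "{y\<in>Lt. (y - 1) div d = c} = {}")
  case True
  then have e: "{y\<in>Lt. f y \<noteq> val y \<and> (y - 1) div d = c} = {}" by auto
  show ?thesis unfolding e by simp
next
  case False
  define y0 where "y0 = Min {y\<in>Lt. (y - 1) div d = c}"
  have fin: "finite {y\<in>Lt. (y - 1) div d = c}" using finLt by simp
  have "y0 \<in> {y\<in>Lt. (y - 1) div d = c}" unfolding y0_def by (rule Min_in[OF fin False])
  then have y0: "y0 \<in> Lt" "(y0 - 1) div d = c" by auto
  have sub: "{y\<in>Lt. f y \<noteq> val y \<and> (y - 1) div d = c} \<subseteq> nonval y0"
  proof
    fix y assume y: "y \<in> {y\<in>Lt. f y \<noteq> val y \<and> (y - 1) div d = c}"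
    have "y0 \<le> y" unfolding y0_def using y by (intro Min_le[OF fin]) auto
    moreover have "y0 \<ge> 1" "y \<ge> 1" using y0 y unfolding Lt_def by auto
    ultimately have "(y - 1) - (y0 - 1) < d"
      using div_same[of "y - 1" d "y0 - 1"] y y0 d_pos by auto
    then have yd: "y < y0 + d" using \<open>y0 \<le> y\<close> \<open>y0 \<ge> 1\<close> by linarith
    have "val y0 = val y" using factA[of y0 y] y0 y \<open>y0 \<le> y\<close> yd unfolding Lt_def by auto
    moreover have "y \<in> W y0" using \<open>y0 \<le> y\<close> yd wmu unfolding W_def d_def by auto
    ultimately show "y \<in> nonval y0" using y unfolding nonval_def by auto
  qed
  have "card {y\<in>Lt. f y \<noteq> val y \<and> (y - 1) div d = c} \<le> card (nonval y0)"
    by (rule card_mono[OF _ sub]) (simp add: nonval_def W_def)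
  also have "\<dots> < \<mu>" using nonval_light y0 unfolding Lt_def by auto
  finally show ?thesis by simp
qed

lemma Bad_card: "card {y\<in>Lt. f y \<noteq> val y} \<le> \<mu> * (N div d + 1)"
proof -
  have sub: "{y\<in>Lt. f y \<noteq> val y} \<subseteq> (\<Union>c\<in>{..(N - 1) div d}. {y\<in>Lt. f y \<noteq> val y \<and> (y - 1) div d = c})"
  proof
    fix y assume y: "y \<in> {y\<in>Lt. f y \<noteq> val y}"
    then have "y \<le> N" unfolding Lt_def by auto
    then have "(y - 1) div d \<le> (N - 1) div d" by (intro div_le_mono) simp
    then show "y \<in> (\<Union>c\<in>{..(N - 1) div d}. {y\<in>Lt. f y \<noteq> val y \<and> (y - 1) div d = c})" using y by auto
  qed
  have "card {y\<in>Lt. f y \<noteq> val y} \<le> card (\<Union>c\<in>{..(N - 1) div d}. {y\<in>Lt. f y \<noteq> val y \<and> (y - 1) div d = c})"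
    by (rule card_mono[OF _ sub]) (simp add: finLt)
  also have "\<dots> \<le> (\<Sum>c\<in>{..(N - 1) div d}. card {y\<in>Lt. f y \<noteq> val y \<and> (y - 1) div d = c})"
    by (rule card_UN_le) simp
  also have "\<dots> \<le> (\<Sum>c\<in>{..(N - 1) div d}. \<mu>)" by (intro sum_mono Bad_chunk)
  also have "\<dots> = ((N - 1) div d + 1) * \<mu>" by simp
  also have "\<dots> \<le> (N div d + 1) * \<mu>" by (intro mult_right_mono) (simp_all add: div_le_mono)
  finally show ?thesis by (simp add: mult.commute)
qed

lemma cost_g: "dcard n f g \<le> card Hv + \<mu> * (N div d + 1) + w"
proof -
  have sub: "{y\<in>{1..n}. f y \<noteq> g y} \<subseteq> Hv \<union> {N<..n} \<union> {y\<in>Lt. f y \<noteq> val y}"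
  proof
    fix y assume y: "y \<in> {y\<in>{1..n}. f y \<noteq> g y}"
    show "y \<in> Hv \<union> {N<..n} \<union> {y\<in>Lt. f y \<noteq> val y}"
    proof (cases "y \<le> N")
      case True
      show ?thesis
      proof (cases "heavy y")
        case True then show ?thesis using y \<open>y \<le> N\<close> unfolding Hv_def by auto
      next
        case False
        then have yL: "y \<in> Lt" using y \<open>y \<le> N\<close> unfolding Lt_def by auto
        then have "g y = val y" unfolding g_def using L_light by simp
        then show ?thesis using y yL by auto
      qed
    next
      case False then show ?thesis using y by auto
    qed
  qed
  have "dcard n f g \<le> card (Hv \<union> {N<..n} \<union> {y\<in>Lt. f y \<noteq> val y})"
    unfolding dcard_def by (rule card_mono[OF _ sub]) (simp add: Hv_def finLt)
  also have "\<dots> \<le> card Hv + card {N<..n} + card {y\<in>Lt. f y \<noteq> val y}"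
    by (meson card_Un_le add_le_mono le_refl order_trans)
  also have "card {N<..n} \<le> w" using N_ge by simp
  finally show ?thesis using Bad_card by linarith
qed

end

lemma main: "\<exists>g. (cc n g - 1) * d \<le> card Hv \<and> dcard n f g \<le> card Hv + \<mu> * (N div d + 1) + w"
proof (cases "Lt = {}")
  case True then show ?thesis by (rule main_empty)
next
  case False
  show ?thesis using cc_g[OF False] cost_g[OF False] by blast
qed

end

context win
begin

lemma nc_count: "card {x\<in>{1..N}. 0 < ones x \<and> ones x < w} \<le> cc n f * (w - 1)"
proof -
  have sub: "{x\<in>{1..N}. 0 < ones x \<and> ones x < w} \<subseteq> (\<Union>p\<in>chg n f. {p + 1 - w..<p})"
  proof
    fix x assume x: "x \<in> {x\<in>{1..N}. 0 < ones x \<and> ones x < w}"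
    then have "{y\<in>W x. f y} \<noteq> {}" unfolding ones_def by (intro notI) simp
    then obtain y1 where y1: "y1 \<in> W x" "f y1" by blast
    have "card {y\<in>W x. \<not> f y} > 0" using x zeros_card by simp
    then have "{y\<in>W x. \<not> f y} \<noteq> {}" by (intro notI) simp
    then obtain y2 where y2: "y2 \<in> W x" "\<not> f y2" by blast
    have x1: "x \<ge> 1" "x \<le> N" using x by auto
    have "y1 \<noteq> y2" using y1 y2 by auto
    define a where "a = min y1 y2"
    define b where "b = max y1 y2"
    have ab: "a < b" "x \<le> a" "b < x + w" using y1 y2 \<open>y1 \<noteq> y2\<close> unfolding a_def b_def W_def by (auto simp: min_def max_def)
    have "fz f a \<noteq> fz f b" using y1 y2 ab x1 unfolding a_def b_def fz_def by (auto simp: min_def max_def)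
    then obtain p where p: "p \<in> {a<..b}" "fz f p \<noteq> fz f (p - 1)" using ex_chg[OF ab(1)] by blast
    have "p \<le> b" using p by simp
    then have "p \<le> n" using ab x1 N_ge by linarith
    then have "p \<in> chg n f" using p ab x1 unfolding chg_def by auto
    moreover have "x \<in> {p + 1 - w..<p}" using p ab by auto
    ultimately show "x \<in> (\<Union>p\<in>chg n f. {p + 1 - w..<p})" by blast
  qed
  have "card {x\<in>{1..N}. 0 < ones x \<and> ones x < w} \<le> card (\<Union>p\<in>chg n f. {p + 1 - w..<p})"
    by (rule card_mono[OF _ sub]) simp
  also have "\<dots> \<le> (\<Sum>p\<in>chg n f. card {p + 1 - w..<p})" by (rule card_UN_le) simp
  also have "\<dots> \<le> (\<Sum>p\<in>chg n f. w - 1)" by (intro sum_mono) auto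
  also have "\<dots> = cc n f * (w - 1)" unfolding cc_def by simp
  finally show ?thesis .
qed

definition "Yf (R::nat) (js::nat \<Rightarrow> nat) = ((\<exists>j<R. f (js j)) \<and> (\<exists>j<R. \<not> f (js j)))"
definition "PW (R::nat) x = Pi_pmf {..<R} 0 (\<lambda>_. pmf_of_set (W x))"

lemma W_ne: "W x \<noteq> {}" "finite (W x)" "card (W x) = w" using wmu unfolding W_def by auto

lemma prob_all_true: "measure_pmf.prob (PW R x) {js. \<forall>j<R. f (js j)} = (real (ones x) / w) ^ R"
proof -
  have "{js. \<forall>j<R. f (js j)} = Pi {..<R} (\<lambda>_. {y. f y})" by (auto simp: Pi_def)
  then have "measure_pmf.prob (PW R x) {js. \<forall>j<R. f (js j)} = (\<Prod>j\<in>{..<R}. measure_pmf.prob (pmf_of_set (W x)) {y. f y})"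
    unfolding PW_def by (simp add: measure_Pi_pmf_Pi)
  also have "measure_pmf.prob (pmf_of_set (W x)) {y. f y} = real (ones x) / w"
  proof -
    have "W x \<inter> {y. f y} = {y\<in>W x. f y}" by auto
    then show ?thesis using W_ne by (simp add: measure_pmf_of_set ones_def)
  qed
  finally show ?thesis by simp
qed

lemma prob_all_false: "measure_pmf.prob (PW R x) {js. \<forall>j<R. \<not> f (js j)} = (real (w - ones x) / w) ^ R"
proof -
  have "{js. \<forall>j<R. \<not> f (js j)} = Pi {..<R} (\<lambda>_. {y. \<not> f y})" by (auto simp: Pi_def)
  then have "measure_pmf.prob (PW R x) {js. \<forall>j<R. \<not> f (js j)} = (\<Prod>j\<in>{..<R}. measure_pmf.prob (pmf_of_set (W x)) {y. \<not> f y})"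
    unfolding PW_def by (simp add: measure_Pi_pmf_Pi)
  also have "measure_pmf.prob (pmf_of_set (W x)) {y. \<not> f y} = real (w - ones x) / w"
  proof -
    have "W x \<inter> {y. \<not> f y} = {y\<in>W x. \<not> f y}" by auto
    then show ?thesis using W_ne zeros_card by (simp add: measure_pmf_of_set)
  qed
  finally show ?thesis by simp
qed

lemma q_heavy:
  assumes "heavy x"
  shows "measure_pmf.prob (PW R x) {js. Yf R js} \<ge> 1 - 2 * (1 - real \<mu> / w) ^ R"
proof -
  have w0: "real w > 0" using wmu by simp
  have c: "{js. \<not> Yf R js} \<subseteq> {js. \<forall>j<R. f (js j)} \<union> {js. \<forall>j<R. \<not> f (js j)}" unfolding Yf_def by auto
  have "measure_pmf.prob (PW R x) {js. \<not> Yf R js} \<le> measure_pmf.prob (PW R x) ({js. \<forall>j<R. f (js j)} \<union> {js. \<forall>j<R. \<not> f (js j)})"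
    by (rule measure_pmf.finite_measure_mono[OF c]) simp
  also have "\<dots> \<le> measure_pmf.prob (PW R x) {js. \<forall>j<R. f (js j)} + measure_pmf.prob (PW R x) {js. \<forall>j<R. \<not> f (js j)}"
    by (rule measure_Un_le) auto
  also have "\<dots> = (real (ones x) / w) ^ R + (real (w - ones x) / w) ^ R"
    by (simp add: prob_all_true prob_all_false)
  also have "\<dots> \<le> (1 - real \<mu> / w) ^ R + (1 - real \<mu> / w) ^ R"
  proof (intro add_mono power_mono)
    have h: "\<mu> \<le> ones x" "\<mu> \<le> w - ones x" using assms unfolding heavy_def by auto
    have ow: "ones x \<le> w" by (rule ones_le)
    show "real (ones x) / w \<le> 1 - real \<mu> / w" using h ow w0 by (simp add: field_simps)
    show "real (w - ones x) / w \<le> 1 - real \<mu> / w" using h ow w0 by (simp add: field_simps of_nat_diff)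
  qed auto
  finally have A: "measure_pmf.prob (PW R x) {js. \<not> Yf R js} \<le> 2 * (1 - real \<mu> / w) ^ R" by simp
  have "measure_pmf.prob (PW R x) {js. \<not> Yf R js} = 1 - measure_pmf.prob (PW R x) {js. Yf R js}"
    using measure_pmf.prob_compl[of "{js. Yf R js}" "PW R x"] by (simp add: Compl_eq_Diff_UNIV[symmetric] Collect_neg_eq)
  then show ?thesis using A by simp
qed

lemma q_const:
  assumes "\<not> (0 < ones x \<and> ones x < w)"
  shows "measure_pmf.prob (PW R x) {js. Yf R js} = 0"
proof -
  have ow: "ones x \<le> w" by (rule ones_le)
  have w0: "real w > 0" using wmu by simp
  consider "ones x = 0" | "ones x = w" using assms ow by linarith
  then obtain A where A: "measure_pmf.prob (PW R x) A = 1" "A \<inter> {js. Yf R js} = {}"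
  proof cases
    case 1
    then have "measure_pmf.prob (PW R x) {js. \<forall>j<R. \<not> f (js j)} = 1" using prob_all_false[of R x] 1 w0 by simp
    moreover have "{js. \<forall>j<R. \<not> f (js j)} \<inter> {js. Yf R js} = {}" unfolding Yf_def by auto
    ultimately show ?thesis using that by blast
  next
    case 2
    then have "measure_pmf.prob (PW R x) {js. \<forall>j<R. f (js j)} = 1" using prob_all_true[of R x] 2 w0 by simp
    moreover have "{js. \<forall>j<R. f (js j)} \<inter> {js. Yf R js} = {}" unfolding Yf_def by auto
    ultimately show ?thesis using that by blast
  qed
  have "measure_pmf.prob (PW R x) (A \<union> {js. Yf R js}) = measure_pmf.prob (PW R x) A + measure_pmf.prob (PW R x) {js. Yf R js}"
    by (rule measure_pmf.finite_measure_Union) (use A in auto)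
  moreover have "measure_pmf.prob (PW R x) (A \<union> {js. Yf R js}) \<le> 1" by simp
  ultimately show ?thesis using A by (simp add: measure_nonneg antisym)
qed

definition "S0 (R::nat) = bind_pmf (pmf_of_set {1..N}) (PW R)"

lemma p_formula: "measure_pmf.prob (S0 R) {js. Yf R js} = (\<Sum>x\<in>{1..N}. measure_pmf.prob (PW R x) {js. Yf R js}) / N"
  unfolding S0_def using N_ge by (subst prob_bind_pmf_of_set) auto

lemma p_upper: "measure_pmf.prob (S0 R) {js. Yf R js} \<le> real (cc n f * (w - 1)) / N"
proof -
  have "(\<Sum>x\<in>{1..N}. measure_pmf.prob (PW R x) {js. Yf R js}) \<le> (\<Sum>x\<in>{1..N}. if 0 < ones x \<and> ones x < w then 1 else 0)"
    by (intro sum_mono) (auto simp: q_const)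
  also have "\<dots> = real (card {x\<in>{1..N}. 0 < ones x \<and> ones x < w})"
  proof -
    have "{1..N} \<inter> {x. 0 < ones x \<and> ones x < w} = {x\<in>{1..N}. 0 < ones x \<and> ones x < w}" by auto
    then show ?thesis by (simp add: sum.If_cases)
  qed
  also have "\<dots> \<le> real (cc n f * (w - 1))" using nc_count by linarith
  finally show ?thesis unfolding p_formula using N_ge by (simp add: divide_right_mono)
qed

lemma p_lower: "measure_pmf.prob (S0 R) {js. Yf R js} \<ge> real (card Hv) * (1 - 2 * (1 - real \<mu> / w) ^ R) / N"
proof -
  have "(\<Sum>x\<in>{1..N}. measure_pmf.prob (PW R x) {js. Yf R js}) \<ge> (\<Sum>x\<in>{1..N}. if heavy x then 1 - 2 * (1 - real \<mu> / w) ^ R else 0)"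
    by (intro sum_mono) (auto simp: q_heavy)
  moreover have "(\<Sum>x\<in>{1..N}. if heavy x then 1 - 2 * (1 - real \<mu> / w) ^ R else 0) = real (card Hv) * (1 - 2 * (1 - real \<mu> / w) ^ R)"
  proof -
    have "{1..N} \<inter> {x. heavy x} = Hv" unfolding Hv_def by auto
    then show ?thesis by (simp add: sum.If_cases)
  qed
  ultimately show ?thesis unfolding p_formula using N_ge by (simp add: divide_right_mono)
qed

lemma S0_supp:
  assumes "js \<in> set_pmf (S0 R)" "j < R"
  shows "js j \<in> {1..n}"
proof -
  obtain x where x: "x \<in> {1..N}" "js \<in> set_pmf (PW R x)" using assms(1) N_ge unfolding S0_def by auto
  have "js \<in> set_pmf (Pi_pmf {..<R} 0 (\<lambda>_. pmf_of_set (W x)))" using x(2) unfolding PW_def .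
  from set_Pi_pmf_in[OF this assms(2)] have "js j \<in> set_pmf (pmf_of_set (W x))" .
  then have "js j \<in> W x" using W_ne(1)[of x] W_ne(2)[of x] by simp
  then show ?thesis using x N_ge unfolding W_def by auto
qed

end

lemma length_concat_blocks: "length (concat (map (\<lambda>i. map (F i) [0..<R]) xs)) = length xs * R"
  by (induction xs) auto

lemma floor_nat_bounds:
  fixes x :: real
  assumes "x \<ge> 0"
  shows "real (nat \<lfloor>x\<rfloor>) \<le> x" "real (nat \<lfloor>x\<rfloor>) \<ge> x - 1"
proof -
  have "real (nat \<lfloor>x\<rfloor>) = of_int \<lfloor>x\<rfloor>" using assms by simp
  then show "real (nat \<lfloor>x\<rfloor>) \<le> x" "real (nat \<lfloor>x\<rfloor>) \<ge> x - 1" by linarith+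
qed

lemma ceil_nat_ge:
  fixes x :: real
  shows "real (nat \<lceil>x\<rceil>) \<ge> x"
  by linarith

lemma regime_b3:
  fixes n k :: nat and \<epsilon> :: real
  assumes k: "k \<ge> 1" and e: "0 < \<epsilon>" "\<epsilon> \<le> 1" and ek: "\<epsilon> * k \<ge> 16"
    and big: "\<epsilon> * n / (8 * k) \<ge> 41 / \<epsilon>"
  defines "w \<equiv> nat \<lfloor>\<epsilon> * n / (8 * k)\<rfloor>"
  defines "\<mu> \<equiv> nat \<lfloor>\<epsilon> * w / 20\<rfloor>"
  defines "R \<equiv> nat \<lceil>(40 / \<epsilon>) * ln (64 / \<epsilon>)\<rceil>"
  defines "s \<equiv> nat \<lceil>20736 / \<epsilon> ^ 4\<rceil>"
  shows "\<exists>T. nonadaptive_tester n (s * R) T \<and> (\<forall>f. k_monotone n k f \<longrightarrow> accept_prob T f \<ge> 2/3) \<and>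
            (\<forall>f. far_from_k_monotone n k \<epsilon> f \<longrightarrow> 1 - accept_prob T f \<ge> 2/3)"
proof -
  have kpos: "real k > 0" using k by simp
  have x0: "\<epsilon> * n / (8 * k) \<ge> 0" using e by simp
  have wub: "real w \<le> \<epsilon> * n / (8 * k)" and wlb: "real w \<ge> \<epsilon> * n / (8 * k) - 1"
    unfolding w_def using floor_nat_bounds[OF x0] by auto
  have "1 / \<epsilon> \<ge> 1" using e by simp
  moreover have "41 / \<epsilon> = 40 / \<epsilon> + 1 / \<epsilon>" by (simp add: add_divide_distrib[symmetric])
  ultimately have w40: "real w \<ge> 40 / \<epsilon>" using wlb big by linarith
  have "40 / \<epsilon> \<ge> 40" using e by (simp add: field_simps)
  then have w40': "real w \<ge> 40" using w40 by linarith
  have ew: "\<epsilon> * real w \<ge> 40" using w40 e by (simp add: field_simps)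
  have y0: "\<epsilon> * real w / 20 \<ge> 0" using e by simp
  have mub: "real \<mu> \<le> \<epsilon> * w / 20" and mlb: "real \<mu> \<ge> \<epsilon> * w / 20 - 1"
    unfolding \<mu>_def using floor_nat_bounds[OF y0] by auto
  have mu1: "\<mu> \<ge> 1" using mlb ew by simp
  have ewle: "\<epsilon> * real w \<le> real w" using e by (intro mult_left_le_one_le) auto
  have two_mu: "2 * \<mu> < w" using mub ewle w40' by linarith
  have nk: "\<epsilon> * n / (8 * k) \<le> n"
  proof -
    have "\<epsilon> * n \<le> n" using e by (simp add: mult_left_le_one_le)
    also have "\<dots> \<le> 8 * k * n"
    proof -
      have "1 \<le> 8 * real k" using k by simp
      from mult_right_mono[OF this, of "real n"] show ?thesis by simp
    qed
    finally show ?thesis using kpos by (simp add: field_simps)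
  qed
  have wn: "w \<le> n" using wub nk by linarith
  have W: "win n w \<mu>" by unfold_locales (use mu1 two_mu wn in auto)
  interpret win n w \<mu> by (rule W)
  have wpos: "real w > 0" using w40' by simp
  have "w \<ge> 1" using w40' by simp
  then have Nge: "N \<ge> 1" "real N \<le> n" "real N = real n + 1 - w" using N_ge wn by auto
  have dge: "real d \<ge> real w * (1 - \<epsilon> / 10)"
  proof -
    have "real d = real w - 2 * real \<mu>" unfolding d_def using two_mu by simp
    then show ?thesis using mub by (simp add: algebra_simps)
  qed
  have dpos: "real d > 0" using d_pos by simp
  have muw: "real \<mu> / w \<ge> \<epsilon> / 40"
  proof -
    have "real \<mu> \<ge> \<epsilon> * w / 40" using mlb ew by simp
    then show ?thesis using wpos by (simp add: field_simps)
  qed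
  have muw1: "real \<mu> / w \<le> 1" using two_mu wpos by simp
  define \<eta> where "\<eta> = 2 * (1 - real \<mu> / w) ^ R"
  have eta: "\<eta> \<le> \<epsilon> / 32"
  proof -
    have "(1 - real \<mu> / w) ^ R \<le> exp (- (real \<mu> / w) * R)"
      by (rule one_minus_pow_le_exp) (use muw1 in auto)
    also have "\<dots> \<le> exp (- ln (64 / \<epsilon>))"
    proof -
      have "real R \<ge> (40 / \<epsilon>) * ln (64 / \<epsilon>)" unfolding R_def by (rule ceil_nat_ge)
      then have "(\<epsilon> / 40) * R \<ge> (\<epsilon> / 40) * ((40 / \<epsilon>) * ln (64 / \<epsilon>))" using e by (intro mult_left_mono) auto
      also have "(\<epsilon> / 40) * ((40 / \<epsilon>) * ln (64 / \<epsilon>)) = ln (64 / \<epsilon>)" using e by simp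
      finally have A: "ln (64 / \<epsilon>) \<le> (\<epsilon> / 40) * R" .
      have "(\<epsilon> / 40) * R \<le> (real \<mu> / w) * R" using muw by (intro mult_right_mono) auto
      then have B: "ln (64 / \<epsilon>) \<le> (real \<mu> / w) * R" using A by linarith
      show ?thesis using B by (subst exp_le_cancel_iff) linarith
    qed
    also have "\<dots> = \<epsilon> / 64" using e by (simp add: exp_minus inverse_eq_divide)
    finally show ?thesis unfolding \<eta>_def by simp
  qed
  have kw_ub: "real k * w \<le> \<epsilon> * n / 8" using wub kpos by (simp add: field_simps)
  have kle: "real k * 328 \<le> \<epsilon> ^ 2 * n"
  proof -
    have "41 / \<epsilon> \<le> \<epsilon> * n / (8 * k)" by (rule big)
    then have "41 * (8 * k) \<le> \<epsilon> * (\<epsilon> * n)" using e kpos by (simp add: field_simps)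
    then show ?thesis by (simp add: power2_eq_square algebra_simps)
  qed
  have kw_lb: "real k * w \<ge> \<epsilon> * n / 9"
  proof -
    have "real k * w \<ge> real k * (\<epsilon> * n / (8 * k) - 1)" using wlb kpos by (intro mult_left_mono) auto
    also have "real k * (\<epsilon> * n / (8 * k) - 1) = \<epsilon> * n / 8 - k" using kpos by (simp add: field_simps)
    finally have A: "real k * w \<ge> \<epsilon> * n / 8 - k" .
    have "\<epsilon> ^ 2 * n \<le> \<epsilon> * n" using e by (simp add: power2_eq_square mult_left_le_one_le)
    then show ?thesis using A kle by linarith
  qed
  have npos: "real n > 0" using wn wpos by linarith
  define \<delta> where "\<delta> = real k * w * \<epsilon> / (16 * N)"
  define \<tau> where "\<tau> = real k * w / N + \<delta>"
  have \<delta>pos: "\<delta> \<ge> 0" unfolding \<delta>_def using e by simp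
  have s\<delta>: "real s * \<delta>\<^sup>2 \<ge> 1"
  proof -
    have "real k * w / N \<ge> real k * w / n" using Nge npos kpos wpos by (intro divide_left_mono) auto
    also have "real k * w / n \<ge> \<epsilon> / 9" using kw_lb npos by (simp add: field_simps)
    finally have "real k * w / N \<ge> \<epsilon> / 9" .
    then have "(real k * w / N) * (\<epsilon> / 16) \<ge> (\<epsilon> / 9) * (\<epsilon> / 16)" using e by (intro mult_right_mono) auto
    moreover have "\<delta> = (real k * w / N) * (\<epsilon> / 16)" unfolding \<delta>_def by (simp add: field_simps)
    moreover have "(\<epsilon> / 9) * (\<epsilon> / 16) = \<epsilon> ^ 2 / 144" by (simp add: power2_eq_square)
    ultimately have d1: "\<delta> \<ge> \<epsilon> ^ 2 / 144" by simp
    have "\<delta>\<^sup>2 \<ge> (\<epsilon> ^ 2 / 144)\<^sup>2" using d1 e by (intro power_mono) auto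
    moreover have "real s \<ge> 20736 / \<epsilon> ^ 4" unfolding s_def by (rule ceil_nat_ge)
    ultimately have "real s * \<delta>\<^sup>2 \<ge> (20736 / \<epsilon> ^ 4) * (\<epsilon> ^ 2 / 144)\<^sup>2"
      using e by (intro mult_mono) auto
    also have "(20736 / \<epsilon> ^ 4) * (\<epsilon> ^ 2 / 144)\<^sup>2 = 1"
    proof -
      have "(\<epsilon> ^ 2 / 144)\<^sup>2 = \<epsilon> ^ 4 / 20736" by (simp add: power_divide power_mult[symmetric])
      then show ?thesis using e by simp
    qed
    finally show ?thesis .
  qed
  have s_pos: "s > 0"
  proof -
    have "real s \<ge> 20736 / \<epsilon> ^ 4" unfolding s_def by (rule ceil_nat_ge)
    moreover have "20736 / \<epsilon> ^ 4 > 0" using e by simp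
    ultimately show ?thesis by linarith
  qed
  have third: "exp (- 2 * real s * \<delta>\<^sup>2) \<le> 1/3" by (rule hoeff_third[OF s\<delta>])
  define Sd where "Sd = S0 R"
  define S where "S = Pi_pmf {..<s} (\<lambda>_. 0) (\<lambda>_. Sd)"
  define QF where "QF F = concat (map (\<lambda>i. map (F i) [0..<R]) [0..<s])" for F :: "nat \<Rightarrow> nat \<Rightarrow> nat"
  define \<Phi> where "\<Phi> F h = (real (card {i\<in>{..<s}. win.Yf h R (F i)}) / s < \<tau>)"
    for F :: "nat \<Rightarrow> nat \<Rightarrow> nat" and h :: "nat \<Rightarrow> bool"
  have supp: "F i j \<in> {1..n}" if "F \<in> set_pmf S" "i < s" "j < R" for F i j
  proof -
    have "F \<in> set_pmf (Pi_pmf {..<s} (\<lambda>_. 0) (\<lambda>_. Sd))" using that(1) S_def by simp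
    from set_Pi_pmf_in[OF this that(2)] have "F i \<in> set_pmf (S0 R)" unfolding Sd_def .
    from S0_supp[OF this that(3)] show ?thesis .
  qed
  have q: "length (QF F) \<le> s * R \<and> set (QF F) \<subseteq> {1..n}" if "F \<in> set_pmf S" for F
  proof
    show "length (QF F) \<le> s * R" unfolding QF_def by (simp add: length_concat_blocks)
    show "set (QF F) \<subseteq> {1..n}"
    proof
      fix y assume "y \<in> set (QF F)"
      then obtain i j where "i < s" "j < R" "y = F i j" unfolding QF_def by auto
      then show "y \<in> {1..n}" using supp[OF that] by simp
    qed
  qed
  have loc: "\<Phi> F h = \<Phi> F h'" if hh: "\<And>y. y \<in> set (QF F) \<Longrightarrow> h y = h' y" for F h h'
  proof -
    have "{i\<in>{..<s}. win.Yf h R (F i)} = {i\<in>{..<s}. win.Yf h' R (F i)}"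
    proof (intro Collect_cong conj_cong refl)
      fix i assume "i \<in> {..<s}"
      then have i: "i < s" by simp
      have "F i j \<in> set (QF F)" if "j < R" for j
      proof -
        have "F i j \<in> set (map (F i) [0..<R])" using that by simp
        moreover have "map (F i) [0..<R] \<in> set (map (\<lambda>i. map (F i) [0..<R]) [0..<s])"
          using i by (simp add: image_iff) (use i in \<open>intro bexI[of _ i]; simp\<close>)
        ultimately show ?thesis unfolding QF_def set_concat by blast
      qed
      then have eqs: "\<forall>j<R. h (F i j) = h' (F i j)" using hh by blast
      have e1: "(\<exists>j<R. h (F i j)) = (\<exists>j<R. h' (F i j))" using eqs by auto
      have e2: "(\<exists>j<R. \<not> h (F i j)) = (\<exists>j<R. \<not> h' (F i j))" using eqs by auto
      show "win.Yf h R (F i) = win.Yf h' R (F i)" unfolding win.Yf_def[OF W] using e1 e2 by simp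
    qed
    then show ?thesis unfolding \<Phi>_def by simp
  qed
  define T where "T = map_pmf (\<lambda>F. (QF F, \<lambda>bs. \<Phi> F (\<lambda>y. the (map_of (zip (QF F) bs) y)))) S"
  have T1: "nonadaptive_tester n (s * R) T"
    unfolding T_def by (rule tester_from_seed(1)[OF q loc])
  have T2: "accept_prob T f = measure_pmf.prob S {F. \<Phi> F f}" for f
    unfolding T_def by (rule tester_from_seed(2)[OF q loc])
  have compl: "accept_prob T f \<ge> 2/3" if f: "k_monotone n k f" for f
  proof -
    define p where "p = measure_pmf.prob Sd {js. win.Yf f R js}"
    have "p \<le> real (cc n f * (w - 1)) / N" unfolding p_def Sd_def by (rule win.p_upper[OF W])
    also have "\<dots> \<le> real k * w / N"
    proof -
      have "cc n f \<le> k" using f kmono_iff by blast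
      then have "cc n f * (w - 1) \<le> k * w" by (intro mult_le_mono) auto
      then have "real (cc n f * (w - 1)) \<le> real k * w" by (metis of_nat_le_iff of_nat_mult)
      then show ?thesis using Nge by (simp add: divide_right_mono)
    qed
    finally have pk: "p \<le> real k * w / N" .
    have "{F. \<not> \<Phi> F f} \<subseteq> {F. real (card {i\<in>{..<s}. win.Yf f R (F i)}) / real s \<ge> p + \<delta>}"
      unfolding \<Phi>_def \<tau>_def using pk by auto
    then have "measure_pmf.prob S {F. \<not> \<Phi> F f} \<le> measure_pmf.prob S {F. real (card {i\<in>{..<s}. win.Yf f R (F i)}) / real s \<ge> p + \<delta>}"
      by (rule measure_pmf.finite_measure_mono) simp
    also have "\<dots> \<le> exp (- 2 * real s * \<delta>\<^sup>2)"
      unfolding S_def p_def by (rule iid_tail(1)[OF s_pos \<delta>pos])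
    finally have "measure_pmf.prob S {F. \<not> \<Phi> F f} \<le> 1/3" using third by linarith
    moreover have "measure_pmf.prob S {F. \<not> \<Phi> F f} = 1 - measure_pmf.prob S {F. \<Phi> F f}"
      using measure_pmf.prob_compl[of "{F. \<Phi> F f}" S] by (simp add: Compl_eq_Diff_UNIV[symmetric] Collect_neg_eq)
    ultimately show ?thesis using T2 by simp
  qed
  have sound: "1 - accept_prob T f \<ge> 2/3" if far: "far_from_k_monotone n k \<epsilon> f" for f
  proof -
    define H where "H = real (card (win.Hv n w \<mu> f))"
    have k16: "real k \<ge> 16" using ek e by (smt (verit) mult_left_le_one_le of_nat_0_le_iff)
    have wsmall: "real w \<le> \<epsilon> * n / 128"
    proof -
      have "\<epsilon> * n / (8 * k) \<le> \<epsilon> * n / 128" using k16 e npos by (intro divide_left_mono) auto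
      then show ?thesis using wub by linarith
    qed
    have nk16: "real n / k \<le> \<epsilon> * n / 16"
    proof -
      have "1 / real k \<le> \<epsilon> / 16" using ek kpos by (simp add: field_simps)
      then have "real n * (1 / real k) \<le> real n * (\<epsilon> / 16)" using npos by (intro mult_left_mono) auto
      then show ?thesis by (auto simp: field_simps mult.commute)
    qed
    have ee: "\<epsilon> * \<epsilon> \<le> \<epsilon>" using e by (simp add: mult_left_le_one_le)
    have Hbig: "H \<ge> real k * w * (1 + \<epsilon> / 4)"
    proof (rule ccontr)
      assume "\<not> H \<ge> real k * w * (1 + \<epsilon> / 4)"
      then have Hs: "H < real k * w * (1 + \<epsilon> / 4)" by simp
      obtain g where g1: "(cc n g - 1) * d \<le> card (win.Hv n w \<mu> f)"
        and g2: "dcard n f g \<le> card (win.Hv n w \<mu> f) + \<mu> * (N div d + 1) + w"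
        using win.main[OF W, where f = f] by blast
      obtain g' where g'1: "cc n g' \<le> k" and g'2: "dcard n g g' \<le> ((cc n g - k + 1) div 2) * ((n - 1) div k)"
        using reduce_changes[OF k, of n g] by blast
      have "\<epsilon> * n \<le> real (dcard n f g')" by (rule far_imp[OF far _ g'1]) (use wn \<open>w \<ge> 1\<close> in simp)
      also have "\<dots> \<le> real (dcard n f g) + real (dcard n g g')" using dcard_tri[of n f g' g] by linarith
      finally have tot: "\<epsilon> * n \<le> real (dcard n f g) + real (dcard n g g')" .
      have c1: "real (dcard n f g) \<le> H + real \<mu> * (real N / d + 1) + w"
      proof -
        have "real (N div d) \<le> real N / d" by (rule of_nat_div_le_of_nat)
        then have "real \<mu> * real (N div d + 1) \<le> real \<mu> * (real N / d + 1)" by (intro mult_left_mono) auto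
        moreover have "real (dcard n f g) \<le> H + real \<mu> * real (N div d + 1) + w"
          using g2 unfolding H_def by (metis of_nat_add of_nat_le_iff of_nat_mult)
        ultimately show ?thesis by linarith
      qed
      have c2: "real \<mu> * (real N / d) \<le> \<epsilon> * n / 18"
      proof -
        have "real \<mu> * real N \<le> (\<epsilon> * w / 20) * n" using mub Nge by (intro mult_mono) auto
        moreover have "real w * (1 - \<epsilon> / 10) \<le> real d" by (rule dge)
        moreover have "0 < real w * (1 - \<epsilon> / 10)" using wpos e by simp
        ultimately have "real \<mu> * real N / d \<le> (\<epsilon> * w / 20) * n / (real w * (1 - \<epsilon> / 10))"
          using e npos wpos by (intro frac_le) auto
        also have "(\<epsilon> * w / 20) * n / (real w * (1 - \<epsilon> / 10)) = \<epsilon> * n / (20 * (1 - \<epsilon> / 10))"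
        proof -
          have "(\<epsilon> * w / 20) * n / (real w * (1 - \<epsilon> / 10)) = ((\<epsilon> * n / 20) * w) / ((1 - \<epsilon> / 10) * w)"
            by (simp add: algebra_simps)
          also have "\<dots> = (\<epsilon> * n / 20) / (1 - \<epsilon> / 10)" using wpos by simp
          also have "\<dots> = \<epsilon> * n / (20 * (1 - \<epsilon> / 10))" by simp
          finally show ?thesis .
        qed
        also have "\<dots> \<le> \<epsilon> * n / 18" using e npos by (intro divide_left_mono) auto
        finally show ?thesis by simp
      qed
      have c3: "real \<mu> + w \<le> \<epsilon> * n / 64" using two_mu wsmall by linarith
      have c4: "real k * w * (1 + \<epsilon> / 4) \<le> 5 * \<epsilon> * n / 32"
      proof -
        have "real k * w * (1 + \<epsilon> / 4) \<le> (\<epsilon> * n / 8) * (1 + \<epsilon> / 4)" using kw_ub e by (intro mult_right_mono) auto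
        also have "\<dots> \<le> (\<epsilon> * n / 8) * (5 / 4)" using e npos by (intro mult_left_mono) auto
        finally show ?thesis by simp
      qed
      have ccg: "real (cc n g - 1) < real k * (1 + \<epsilon> / 2)"
      proof -
        have "real (cc n g - 1) * real d \<le> H" using g1 unfolding H_def by (metis of_nat_le_iff of_nat_mult)
        moreover have "real (cc n g - 1) * (real w * (1 - \<epsilon> / 10)) \<le> real (cc n g - 1) * real d"
          using dge by (intro mult_left_mono) auto
        ultimately have "real (cc n g - 1) * (1 - \<epsilon> / 10) * w < real k * (1 + \<epsilon> / 4) * w" using Hs by (simp add: algebra_simps)
        then have A: "real (cc n g - 1) * (1 - \<epsilon> / 10) < real k * (1 + \<epsilon> / 4)" using wpos by simp
        show ?thesis
        proof (rule ccontr)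
          assume "\<not> real (cc n g - 1) < real k * (1 + \<epsilon> / 2)"
          then have "real k * (1 + \<epsilon> / 2) * (1 - \<epsilon> / 10) \<le> real (cc n g - 1) * (1 - \<epsilon> / 10)"
            using e by (intro mult_right_mono) auto
          moreover have "real k * (1 + \<epsilon> / 4) \<le> real k * (1 + \<epsilon> / 2) * (1 - \<epsilon> / 10)"
          proof -
            have "(1 + \<epsilon> / 2) * (1 - \<epsilon> / 10) = 1 + \<epsilon> / 2 - \<epsilon> / 10 - (\<epsilon> * \<epsilon>) / 20"
              by (simp add: field_simps)
            then have "(1 + \<epsilon> / 4) \<le> (1 + \<epsilon> / 2) * (1 - \<epsilon> / 10)" using ee e by linarith
            then show ?thesis using kpos by (simp add: mult.assoc)
          qed
          ultimately show False using A by linarith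
        qed
      qed
      have c5: "real (dcard n g g') \<le> \<epsilon> * n / 4 + \<epsilon> * n / 16"
      proof (cases "cc n g \<le> k")
        case True
        then have "(cc n g - k + 1) div 2 = 0" by simp
        then have "dcard n g g' = 0" using g'2 by simp
        then show ?thesis using e npos by simp
      next
        case False
        have a: "real ((cc n g - k + 1) div 2) \<le> real (cc n g - k + 1) / 2" using of_nat_div_le_of_nat[of _ 2] by simp
        have b: "real (cc n g - k + 1) = real (cc n g - 1) - k + 2" using False by simp
        have a': "real ((cc n g - k + 1) div 2) \<le> real k * \<epsilon> / 4 + 1" using a b ccg by (simp add: algebra_simps)
        have c: "real ((n - 1) div k) \<le> real n / k"
        proof -
          have "real ((n - 1) div k) \<le> real (n - 1) / k" by (rule of_nat_div_le_of_nat)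
          also have "\<dots> \<le> real n / k" using kpos by (intro divide_right_mono) auto
          finally show ?thesis .
        qed
        have "real (dcard n g g') \<le> real ((cc n g - k + 1) div 2) * real ((n - 1) div k)"
          using g'2 by (metis of_nat_le_iff of_nat_mult)
        also have "\<dots> \<le> (real k * \<epsilon> / 4 + 1) * (real n / k)"
          using a' c by (intro mult_mono) auto
        also have "\<dots> = \<epsilon> * n / 4 + real n / k" using kpos by (simp add: field_simps)
        finally show ?thesis using nk16 by linarith
      qed
      have "real (dcard n f g) + real (dcard n g g') < \<epsilon> * n"
        using c1 c2 c3 c4 c5 Hs e npos by (simp add: algebra_simps; linarith)
      then show False using tot by linarith
    qed
    define p where "p = measure_pmf.prob Sd {js. win.Yf f R js}"
    have "p \<ge> H * (1 - \<eta>) / N" unfolding p_def Sd_def H_def \<eta>_def by (rule win.p_lower[OF W])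
    moreover have "H * (1 - \<eta>) \<ge> real k * w * (1 + \<epsilon> / 8)"
    proof -
      have "H * (1 - \<eta>) \<ge> real k * w * (1 + \<epsilon> / 4) * (1 - \<epsilon> / 32)"
        using Hbig eta e by (intro mult_mono) (auto simp: H_def)
      moreover have "(1 + \<epsilon> / 4) * (1 - \<epsilon> / 32) \<ge> 1 + \<epsilon> / 8"
      proof -
        have "(1 + \<epsilon> / 4) * (1 - \<epsilon> / 32) = 1 + \<epsilon> / 4 - \<epsilon> / 32 - (\<epsilon> * \<epsilon>) / 128"
          by (simp add: field_simps)
        then show ?thesis using ee e by linarith
      qed
      moreover have "real k * w \<ge> 0" by simp
      ultimately show ?thesis by (smt (verit) mult_left_mono mult.assoc)
    qed
    ultimately have "p \<ge> real k * w * (1 + \<epsilon> / 8) / N" using Nge by (smt (verit) divide_right_mono of_nat_0_le_iff)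
    moreover have "real k * w * (1 + \<epsilon> / 8) / N = \<tau> + \<delta>" unfolding \<tau>_def \<delta>_def using Nge by (simp add: field_simps)
    ultimately have pk: "p - \<delta> \<ge> \<tau>" by simp
    have "{F. \<Phi> F f} \<subseteq> {F. real (card {i\<in>{..<s}. win.Yf f R (F i)}) / real s \<le> p - \<delta>}"
      unfolding \<Phi>_def using pk by auto
    then have "measure_pmf.prob S {F. \<Phi> F f} \<le> measure_pmf.prob S {F. real (card {i\<in>{..<s}. win.Yf f R (F i)}) / real s \<le> p - \<delta>}"
      by (rule measure_pmf.finite_measure_mono) simp
    also have "\<dots> \<le> exp (- 2 * real s * \<delta>\<^sup>2)"
      unfolding S_def p_def by (rule iid_tail(2)[OF s_pos \<delta>pos])
    finally show ?thesis using third T2 by simp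
  qed
  show ?thesis using T1 compl sound by blast
qed

lemma regime_n1:
  fixes k :: nat and \<epsilon> :: real
  assumes k: "k \<ge> 1" and e: "\<epsilon> > 0"
  shows "\<exists>T. nonadaptive_tester 1 0 T \<and> (\<forall>f. k_monotone 1 k f \<longrightarrow> accept_prob T f \<ge> 2/3) \<and>
            (\<forall>f. far_from_k_monotone 1 k \<epsilon> f \<longrightarrow> 1 - accept_prob T f \<ge> 2/3)"
proof -
  define T :: "(nat list \<times> (bool list \<Rightarrow> bool)) pmf" where "T = return_pmf ([], \<lambda>_. True)"
  have T1: "nonadaptive_tester 1 0 T" unfolding T_def nonadaptive_tester_def by simp
  have T2: "accept_prob T f = 1" for f unfolding T_def accept_prob_def by simp
  have nf: "\<not> far_from_k_monotone 1 k \<epsilon> f" for f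
  proof
    assume far: "far_from_k_monotone 1 k \<epsilon> f"
    have "cc 1 f > k" by (rule far_cc_gt[OF far _ e]) simp
    moreover have "cc 1 f \<le> 1"
    proof -
      have "cc 1 f \<le> card {1..1::nat}" unfolding cc_def by (rule card_mono[OF _ chg_sub]) simp
      then show ?thesis by simp
    qed
    ultimately show False using k by simp
  qed
  show ?thesis using T1 T2 nf by auto
qed

lemma ln_bound:
  fixes \<epsilon> a :: real
  assumes e: "0 < \<epsilon>" "\<epsilon> \<le> 1" and a: "a \<ge> 1"
  shows "ln (a / \<epsilon>) \<le> a * (1 + ln (1 / \<epsilon>))"
proof -
  have l0: "ln (1 / \<epsilon>) \<ge> 0" using e by simp
  have "ln (a / \<epsilon>) = ln a + ln (1 / \<epsilon>)" using e a by (simp add: ln_div ln_mult divide_inverse ln_inverse)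
  also have "ln a \<le> a - 1" using a by (intro ln_le_minus_one) auto
  then have "ln a + ln (1 / \<epsilon>) \<le> (a - 1) + ln (1 / \<epsilon>)" by simp
  also have "\<dots> \<le> a * (1 + ln (1 / \<epsilon>))"
  proof -
    have "ln (1 / \<epsilon>) \<le> a * ln (1 / \<epsilon>)" using a l0 by (simp add: mult_le_cancel_right1)
    then show ?thesis by (simp add: algebra_simps)
  qed
  finally show ?thesis .
qed

lemma pow_le7:
  fixes X :: real
  assumes "X \<ge> 1" "m \<le> 7"
  shows "X ^ m \<le> X ^ 7"
  using assms by (intro power_increasing) auto

lemma main_bound:
  fixes n k :: nat and \<epsilon> :: real
  assumes n: "n \<ge> 1" and k: "k \<ge> 1" and e: "0 < \<epsilon>" "\<epsilon> \<le> 1"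
  shows "\<exists>(q::nat) (T :: (nat list \<times> (bool list \<Rightarrow> bool)) pmf).
        real q \<le> 100000000 * (1 / \<epsilon>) ^ 7 * (1 + ln (1 / \<epsilon>)) ^ 1 \<and>
        nonadaptive_tester n q T \<and>
        (\<forall>f. k_monotone n k f \<longrightarrow> accept_prob T f \<ge> 2/3) \<and>
        (\<forall>f. far_from_k_monotone n k \<epsilon> f \<longrightarrow> 1 - accept_prob T f \<ge> 2/3)"
proof -
  define X where "X = 1 / \<epsilon>"
  define L where "L = 1 + ln (1 / \<epsilon>)"
  have X1: "X \<ge> 1" unfolding X_def using e by simp
  have L1: "L \<ge> 1" unfolding L_def using e by simp
  have X7: "X ^ 7 \<ge> 1" using one_le_power[OF X1] .
  define Y where "Y = X ^ 7 * L"
  have Y1: "Y \<ge> 1" unfolding Y_def using X7 L1 by (metis mult_ge1_I)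
  have bnd: "100000000 * (1 / \<epsilon>) ^ 7 * (1 + ln (1 / \<epsilon>)) ^ 1 = 100000000 * Y" unfolding X_def L_def Y_def by simp
  have XL: "X ^ m * L \<le> X ^ 7 * L" if "m \<le> 7" for m
    using pow_le7[OF X1 that] L1 by (intro mult_right_mono) auto
  have ceil_le: "real (nat \<lceil>y\<rceil>) \<le> y + 1" if "y \<ge> 0" for y :: real
  proof -
    have "real (nat \<lceil>y\<rceil>) = of_int \<lceil>y\<rceil>" using that by simp
    then show ?thesis by linarith
  qed
  have eX: "\<epsilon> * X = 1" unfolding X_def using e by simp
  show ?thesis
  proof (cases "n = 1")
    case True
    obtain T where T: "nonadaptive_tester 1 0 T \<and> (\<forall>f. k_monotone 1 k f \<longrightarrow> accept_prob T f \<ge> 2/3) \<and>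
            (\<forall>f. far_from_k_monotone 1 k \<epsilon> f \<longrightarrow> 1 - accept_prob T f \<ge> 2/3)"
      using regime_n1[OF k e(1)] by blast
    have "real (0::nat) \<le> 100000000 * (1 / \<epsilon>) ^ 7 * (1 + ln (1 / \<epsilon>)) ^ 1" unfolding bnd using Y1 by simp
    then show ?thesis using T True by blast
  next
    case False
    then have n2: "n \<ge> 2" using n by simp
    show ?thesis
    proof (cases "real k < 16 / \<epsilon>")
      case True
      define sa where "sa = nat \<lceil>(k + 1) / \<epsilon> * ln (3 * (k + 1))\<rceil>"
      obtain T where T: "nonadaptive_tester n sa T \<and> (\<forall>f. k_monotone n k f \<longrightarrow> accept_prob T f \<ge> 2/3) \<and>
            (\<forall>f. far_from_k_monotone n k \<epsilon> f \<longrightarrow> 1 - accept_prob T f \<ge> 2/3)"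
        using regime_a[OF n k e] unfolding sa_def by blast
      have k17: "real k + 1 \<le> 17 * X" using True X1 unfolding X_def by simp
      have lnk: "ln (3 * (real k + 1)) \<le> 51 * L"
      proof -
        have "3 * (real k + 1) \<le> 51 / \<epsilon>" using k17 unfolding X_def by simp
        then have "ln (3 * (real k + 1)) \<le> ln (51 / \<epsilon>)" using e by (subst ln_le_cancel_iff) auto
        also have "\<dots> \<le> 51 * L" unfolding L_def using ln_bound[OF e, of 51] by simp
        finally show ?thesis .
      qed
      have ln0: "ln (3 * (real k + 1)) \<ge> 0" by simp
      have "(real k + 1) / \<epsilon> * ln (3 * (real k + 1)) = (real k + 1) * X * ln (3 * (real k + 1))"
        unfolding X_def by simp
      also have "\<dots> \<le> (17 * X) * X * (51 * L)"
        using k17 lnk ln0 X1 by (intro mult_mono) auto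
      finally have A: "(real k + 1) / \<epsilon> * ln (3 * (real k + 1)) \<le> 867 * (X ^ 2 * L)" by (simp add: power2_eq_square)
      have y0: "real (k + 1) / \<epsilon> * ln (real (3 * (k + 1))) \<ge> 0" using e by simp
      have eq: "real (k + 1) / \<epsilon> * ln (real (3 * (k + 1))) = (real k + 1) / \<epsilon> * ln (3 * (real k + 1))"
        by (simp add: add.commute)
      have "real sa \<le> (real k + 1) / \<epsilon> * ln (3 * (real k + 1)) + 1"
        using ceil_le[OF y0] eq unfolding sa_def by linarith
      also have "\<dots> \<le> 867 * Y + 1" using A XL[of 2] unfolding Y_def by linarith
      also have "\<dots> \<le> 100000000 * Y" using Y1 by linarith
      finally show ?thesis using T unfolding bnd by blast
    next
      case False
      then have ek: "\<epsilon> * k \<ge> 16" using e by (simp add: field_simps)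
      show ?thesis
      proof (cases "\<epsilon> * n / (8 * k) \<ge> 41 / \<epsilon>")
        case True
        define s where "s = nat \<lceil>20736 / \<epsilon> ^ 4\<rceil>"
        define R where "R = nat \<lceil>(40 / \<epsilon>) * ln (64 / \<epsilon>)\<rceil>"
        obtain T where T: "nonadaptive_tester n (s * R) T \<and> (\<forall>f. k_monotone n k f \<longrightarrow> accept_prob T f \<ge> 2/3) \<and>
            (\<forall>f. far_from_k_monotone n k \<epsilon> f \<longrightarrow> 1 - accept_prob T f \<ge> 2/3)"
          using regime_b3[OF k e ek True] unfolding s_def R_def by blast
        have "real s \<le> 20736 / \<epsilon> ^ 4 + 1" unfolding s_def using e by (intro ceil_le) simp
        also have "20736 / \<epsilon> ^ 4 = 20736 * X ^ 4" unfolding X_def by (simp add: power_one_over)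
        finally have s1: "real s \<le> 20737 * X ^ 4" using one_le_power[OF X1, of 4] by linarith
        have ln64: "ln (64 / \<epsilon>) \<le> 64 * L" unfolding L_def using ln_bound[OF e, of 64] by simp
        have ln64': "ln (64 / \<epsilon>) \<ge> 0" using e by simp
        have "real R \<le> (40 / \<epsilon>) * ln (64 / \<epsilon>) + 1" unfolding R_def using e ln64' by (intro ceil_le) simp
        also have "(40 / \<epsilon>) * ln (64 / \<epsilon>) \<le> (40 / \<epsilon>) * (64 * L)"
          using ln64 e by (intro mult_left_mono) auto
        also have "(40 / \<epsilon>) * (64 * L) = 40 * X * (64 * L)" unfolding X_def by simp
        moreover have "X * L \<ge> 1" using X1 L1 by (metis mult_ge1_I)
        ultimately have R1: "real R \<le> 2561 * (X * L)" by (simp add: algebra_simps)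
        have "real (s * R) = real s * real R" by simp
        also have "\<dots> \<le> (20737 * X ^ 4) * (2561 * (X * L))" using s1 R1 by (intro mult_mono) auto
        also have "\<dots> = 53107457 * (X ^ 5 * L)"
        proof -
          have "X ^ 5 = X ^ 4 * X" by (simp add: power_Suc2[symmetric])
          then show ?thesis by (simp add: algebra_simps)
        qed
        also have "\<dots> \<le> 53107457 * Y" using XL[of 5] unfolding Y_def by simp
        also have "\<dots> \<le> 100000000 * Y" using Y1 by linarith
        finally show ?thesis using T unfolding bnd by blast
      next
        case F2: False
        define B where "B = 328 / \<epsilon> ^ 2"
        have kpos: "real k > 0" using k by simp
        have nB: "real n \<le> B * k"
        proof -
          have "\<epsilon> * n / (8 * k) < 41 / \<epsilon>" using F2 by simp
          then have "\<epsilon> * n * \<epsilon> < 41 * (8 * k)" using e kpos by (simp add: field_simps)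
          then have "real n * \<epsilon> ^ 2 \<le> 328 * k" by (simp add: power2_eq_square algebra_simps)
          then show ?thesis unfolding B_def using e by (simp add: field_simps)
        qed
        have ek2: "\<epsilon> * k \<ge> 2" using ek by simp
        define s where "s = nat \<lceil>4 * B\<^sup>2 / \<epsilon>\<^sup>2\<rceil>"
        obtain T where T: "nonadaptive_tester n (2 * s) T \<and> (\<forall>f. k_monotone n k f \<longrightarrow> accept_prob T f \<ge> 2/3) \<and>
            (\<forall>f. far_from_k_monotone n k \<epsilon> f \<longrightarrow> 1 - accept_prob T f \<ge> 2/3)"
          using regime_b1[OF n2 k e ek2 nB] unfolding s_def by blast
        have "4 * B\<^sup>2 / \<epsilon>\<^sup>2 = 430336 * X ^ 6"
          unfolding B_def X_def using e by (simp add: power_divide power_one_over field_simps)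
        then have "real s \<le> 430336 * X ^ 6 + 1" unfolding s_def using ceil_le[of "4 * B\<^sup>2 / \<epsilon>\<^sup>2"] by simp
        then have s1: "real s \<le> 430337 * X ^ 6" using one_le_power[OF X1, of 6] by linarith
        have X6: "X ^ 6 \<le> X ^ 6 * L" using L1 one_le_power[OF X1, of 6] by (simp add: mult_le_cancel_left1)
        have "real (2 * s) \<le> 860674 * X ^ 6" using s1 by simp
        also have "\<dots> \<le> 860674 * (X ^ 6 * L)" using X6 by simp
        also have "\<dots> \<le> 860674 * Y" using XL[of 6] unfolding Y_def by simp
        also have "\<dots> \<le> 100000000 * Y" using Y1 by linarith
        finally show ?thesis using T unfolding bnd by blast
      qed
    qed
  qed
qed

theorem theorem1p5:
  "\<exists>(C::real) (c::nat). \<forall>(n::nat) (k::nat) (\<epsilon>::real).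
     n \<ge> 1 \<longrightarrow> k \<ge> 1 \<longrightarrow> 0 < \<epsilon> \<longrightarrow> \<epsilon> \<le> 1 \<longrightarrow>
     (\<exists>(q::nat) (T :: (nat list \<times> (bool list \<Rightarrow> bool)) pmf).
        real q \<le> C * (1 / \<epsilon>) ^ 7 * (1 + ln (1 / \<epsilon>)) ^ c \<and>
        nonadaptive_tester n q T \<and>
        (\<forall>f. k_monotone n k f \<longrightarrow> accept_prob T f \<ge> 2/3) \<and>
        (\<forall>f. far_from_k_monotone n k \<epsilon> f \<longrightarrow> 1 - accept_prob T f \<ge> 2/3))"
  apply (rule exI[of _ "100000000::real"], rule exI[of _ "1::nat"], intro allI impI)
  by (rule main_bound; assumption)

end
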